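(* Let $n,a,b,Z$ be positive integers with $\max\{a,b\}\le n\le a+b$, let $\Psi\in\mathbb{R}^{n\times n}$ be a positive semidefinite matrix, and let $K^{(3)}\in\mathbb{R}^{m_3\times n}$, $K^{(4)}\in\mathbb{R}^{m_4\times n}$. Then there exist integers $\tilde n,\tilde a,\tilde b$ with $\max\{\tilde a,\tilde b\}\le\tilde n\le\tilde a+\tilde b$, a positive semidefinite matrix $\tilde\Psi\in\mathbb{R}^{\tilde n\times\tilde n}$ with $\operatorname{rank}(\tilde\Psi)=\tilde n$, and matrices $\tilde K^{(3)}\in\mathbb{R}^{m_3\times\tilde n}$, $\tilde K^{(4)}\in\mathbb{R}^{m_4\times\tilde n}$, such that the problems $\mathrm{TaskAwareCoding}(n,\Psi,a,b,Z,K^{(3)},K^{(4)})$ and $\mathrm{TaskAwareCoding}(\tilde n,\tilde\Psi,\tilde a,\tilde b,Z,\tilde K^{(3)},\tilde K^{(4)})$ have equal optimal overall task losses, and an optimal coding scheme for either of the two problems can be transformed linearly (by multiplying its encoding and decoding matrices by fixed matrices) into an optimal coding scheme for the other.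
   Context: Problem $\mathrm{TaskAwareCoding}(n,\Psi,a,b,Z,K^{(3)},K^{(4)})$ (task-aware linear network coding over the butterfly network): let $x=(x_1,\dots,x_n)^\top$ be a real random vector with $\mathbb{E}[x]=0$ and covariance $\mathbb{E}[xx^\top]=\Psi$, and let $x^{(1)}=(x_1,\dots,x_a)^\top$, $x^{(2)}=(x_{n-b+1},\dots,x_n)^\top$. A coding scheme consists of matrices $E^{(1,3)},E^{(1,5)}\in\mathbb{R}^{Z\times a}$, $E^{(2,4)},E^{(2,5)}\in\mathbb{R}^{Z\times b}$, $E^{(5,6)}\in\mathbb{R}^{Z\times 2Z}$, $D^{(3)},D^{(4)}\in\mathbb{R}^{n\times 2Z}$. Set $\phi^{(1,3)}=E^{(1,3)}x^{(1)}$, $\phi^{(1,5)}=E^{(1,5)}x^{(1)}$, $\phi^{(2,4)}=E^{(2,4)}x^{(2)}$, $\phi^{(2,5)}=E^{(2,5)}x^{(2)}$, $\phi^{(5,6)}=E^{(5,6)}\begin{bmatrix}\phi^{(1,5)}\\ \phi^{(2,5)}\end{bmatrix}$, and reconstructions $\hat x^{(3)}=D^{(3)}\begin{bmatrix}\phi^{(1,3)}\\ \phi^{(5,6)}\end{bmatrix}$, $\hat x^{(4)}=D^{(4)}\begin{bmatrix}\phi^{(2,4)}\\ \phi^{(5,6)}\end{bmatrix}$. The overall task loss is $\mathcal{L}_{\text{total}}=\sum_{i\in\{3,4\}}\mathbb{E}\|K^{(i)}x-K^{(i)}\hat x^{(i)}\|_2^2$, which depends on the distribution of $x$ only through $\Psi$.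 The problem is to minimize $\mathcal{L}_{\text{total}}$ over all coding schemes; its optimal overall task loss is the minimum value, and an optimal coding scheme is a minimizer. *)

theory Defs
  imports "Jordan_Normal_Form.DL_Rank"
begin

definition psd_mat :: "nat \<Rightarrow> real mat \<Rightarrow> bool" where
  "psd_mat n P \<longleftrightarrow> P \<in> carrier_mat n n \<and> transpose_mat P = P \<and>
     (\<forall>v \<in> carrier_vec n. 0 \<le> v \<bullet> (P *\<^sub>v v))"

record scheme =
  E13 :: "real mat"
  E15 :: "real mat"
  E24 :: "real mat"
  E25 :: "real mat"
  E56 :: "real mat"
  D3 :: "real mat"
  D4 :: "real mat"

definition scheme_ok :: "nat \<Rightarrow> nat \<Rightarrow> nat \<Rightarrow> nat \<Rightarrow> scheme \<Rightarrow> bool" where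
  "scheme_ok n a b Z s \<longleftrightarrow>
     E13 s \<in> carrier_mat Z a \<and> E15 s \<in> carrier_mat Z a \<and>
     E24 s \<in> carrier_mat Z b \<and> E25 s \<in> carrier_mat Z b \<and>
     E56 s \<in> carrier_mat Z (2 * Z) \<and>
     D3 s \<in> carrier_mat n (2 * Z) \<and> D4 s \<in> carrier_mat n (2 * Z)"

text \<open>x1 = sel1 n a * x (first a coordinates), x2 = sel2 n b * x (last b coordinates).\<close>
definition sel1 :: "nat \<Rightarrow> nat \<Rightarrow> real mat" where
  "sel1 n a = mat a n (\<lambda>(i, j). if j = i then 1 else 0)"

definition sel2 :: "nat \<Rightarrow> nat \<Rightarrow> real mat" where
  "sel2 n b = mat b n (\<lambda>(i, j). if j = n - b + i then 1 else 0)"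

definition vstack :: "real mat \<Rightarrow> real mat \<Rightarrow> real mat" where
  "vstack A B = mat (dim_row A + dim_row B) (dim_col A)
     (\<lambda>(i, j). if i < dim_row A then A $$ (i, j) else B $$ (i - dim_row A, j))"

text \<open>phi56 = enc56 * x, and the messages received at nodes 3 and 4 as linear maps of x.\<close>
definition enc56 :: "nat \<Rightarrow> nat \<Rightarrow> nat \<Rightarrow> scheme \<Rightarrow> real mat" where
  "enc56 n a b s = E56 s * vstack (E15 s * sel1 n a) (E25 s * sel2 n b)"

definition msg3 :: "nat \<Rightarrow> nat \<Rightarrow> nat \<Rightarrow> scheme \<Rightarrow> real mat" where
  "msg3 n a b s = vstack (E13 s * sel1 n a) (enc56 n a b s)"

definition msg4 :: "nat \<Rightarrow> nat \<Rightarrow> nat \<Rightarrow> scheme \<Rightarrow> real mat" where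
  "msg4 n a b s = vstack (E24 s * sel2 n b) (enc56 n a b s)"

definition mat_trace :: "real mat \<Rightarrow> real" where
  "mat_trace A = (\<Sum>i<dim_row A. A $$ (i, i))"

text \<open>E||K x - K D M x||^2 = tr (K (I - D M) Psi (I - D M)^T K^T) for E[x]=0, E[x x^T]=Psi.\<close>
definition task_err :: "nat \<Rightarrow> real mat \<Rightarrow> real mat \<Rightarrow> real mat \<Rightarrow> real mat \<Rightarrow> real" where
  "task_err n Psi K D M =
     (let R = K * (1\<^sub>m n - D * M) in mat_trace (R * Psi * transpose_mat R))"

definition total_loss :: "nat \<Rightarrow> real mat \<Rightarrow> nat \<Rightarrow> nat \<Rightarrow> real mat \<Rightarrow> real mat \<Rightarrow> scheme \<Rightarrow> real" where
  "total_loss n Psi a b K3 K4 s =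
     task_err n Psi K3 (D3 s) (msg3 n a b s) + task_err n Psi K4 (D4 s) (msg4 n a b s)"

definition opt_loss :: "nat \<Rightarrow> real mat \<Rightarrow> nat \<Rightarrow> nat \<Rightarrow> nat \<Rightarrow> real mat \<Rightarrow> real mat \<Rightarrow> real" where
  "opt_loss n Psi a b Z K3 K4 = Inf {total_loss n Psi a b K3 K4 s | s. scheme_ok n a b Z s}"

definition optimal_scheme :: "nat \<Rightarrow> real mat \<Rightarrow> nat \<Rightarrow> nat \<Rightarrow> nat \<Rightarrow> real mat \<Rightarrow> real mat \<Rightarrow> scheme \<Rightarrow> bool" where
  "optimal_scheme n Psi a b Z K3 K4 s \<longleftrightarrow> scheme_ok n a b Z s \<and>
     (\<forall>s'. scheme_ok n a b Z s' \<longrightarrow> total_loss n Psi a b K3 K4 s \<le> total_loss n Psi a b K3 K4 s')"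

definition lin_transform :: "real mat \<Rightarrow> real mat \<Rightarrow> real mat \<Rightarrow> real mat \<Rightarrow> real mat \<Rightarrow>
    real mat \<Rightarrow> real mat \<Rightarrow> scheme \<Rightarrow> scheme" where
  "lin_transform P13 P15 P24 P25 P56 Q3 Q4 s =
     \<lparr>E13 = E13 s * P13, E15 = E15 s * P15, E24 = E24 s * P24, E25 = E25 s * P25,
      E56 = E56 s * P56, D3 = Q3 * D3 s, D4 = Q4 * D4 s\<rparr>"

end

theory Submission
  imports Defs
begin

lemma mat_trace_comm:
  fixes A B :: "real mat"
  assumes "A \<in> carrier_mat m k" "B \<in> carrier_mat k m"
  shows "mat_trace (A*B) = mat_trace (B*A)"
proof -
  have "mat_trace (A*B) = (\<Sum>i<m. \<Sum>l<k. A$$(i,l)*B$$(l,i))"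
    using assms by (simp add: mat_trace_def scalar_prod_def atLeast0LessThan)
  also have "\<dots> = (\<Sum>l<k. \<Sum>i<m. B$$(l,i)*A$$(i,l))"
    by (subst sum.swap) (simp add: mult.commute)
  also have "\<dots> = mat_trace (B*A)"
    using assms by (simp add: mat_trace_def scalar_prod_def atLeast0LessThan)
  finally show ?thesis .
qed

lemma mat_trace_add:
  fixes A B :: "real mat"
  assumes "A \<in> carrier_mat m m" "B \<in> carrier_mat m m"
  shows "mat_trace (A+B) = mat_trace A + mat_trace B"
  using assms by (simp add: mat_trace_def sum.distrib)

lemma psd_sym:
  assumes "psd_mat n P" "i < n" "j < n"
  shows "P $$ (i,j) = P $$ (j,i)"
proof -
  have c: "P \<in> carrier_mat n n" "transpose_mat P = P" using assms(1) psd_mat_def by auto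
  have "P $$ (i,j) = transpose_mat P $$ (i,j)" using c by simp
  also have "\<dots> = P $$ (j,i)" using c assms by (subst index_transpose_mat) auto
  finally show ?thesis .
qed

lemma psd_congr:
  fixes X P :: "real mat"
  assumes "psd_mat k P" "X \<in> carrier_mat m k"
  shows "psd_mat m (X * P * transpose_mat X)"
proof -
  have P: "P \<in> carrier_mat k k" "transpose_mat P = P" "\<And>v. v \<in> carrier_vec k \<Longrightarrow> 0 \<le> v \<bullet> (P *\<^sub>v v)"
    using assms(1) psd_mat_def by auto
  have c: "X * P * transpose_mat X \<in> carrier_mat m m" using assms P by auto
  have t: "transpose_mat (X * P * transpose_mat X) = X * P * transpose_mat X"
    using assms P by (simp add: transpose_mult[of _ m k _ m] transpose_mult[of _ k k _ m] )
  have q: "0 \<le> v \<bullet> ((X * P * transpose_mat X) *\<^sub>v v)" if v: "v \<in> carrier_vec m" for v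
  proof -
    let ?w = "transpose_mat X *\<^sub>v v"
    have w: "?w \<in> carrier_vec k" using assms v by auto
    have "(X * P * transpose_mat X) *\<^sub>v v = X *\<^sub>v (P *\<^sub>v ?w)"
      using assms P v by (simp add: assoc_mult_mat_vec[of _ m k _ m])
    hence "v \<bullet> ((X * P * transpose_mat X) *\<^sub>v v) = ?w \<bullet> (P *\<^sub>v ?w)"
      using transpose_vec_mult_scalar[of X m k "P *\<^sub>v ?w" v] assms P v w by simp
    thus ?thesis using P(3)[OF w] by simp
  qed
  show ?thesis unfolding psd_mat_def using c t q by auto
qed

lemma psd_diag_nonneg:
  fixes P :: "real mat"
  assumes "psd_mat n P" "i < n"
  shows "0 \<le> P $$ (i,i)"
proof -
  have P: "P \<in> carrier_mat n n" "\<And>v. v \<in> carrier_vec n \<Longrightarrow> 0 \<le> v \<bullet> (P *\<^sub>v v)"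
    using assms(1) psd_mat_def by auto
  have "unit_vec n i \<bullet> (P *\<^sub>v unit_vec n i) = P $$ (i,i)"
    using P assms(2) by (simp add: scalar_prod_left_unit mult_mat_vec_def)
  thus ?thesis using P(2)[of "unit_vec n i"] assms by simp
qed

lemma psd_trace_nonneg:
  assumes "psd_mat n P" shows "0 \<le> mat_trace P"
  using assms psd_diag_nonneg unfolding mat_trace_def psd_mat_def
  by (auto intro!: sum_nonneg)

lemma trace_congr_nonneg:
  fixes X P :: "real mat"
  assumes "psd_mat k P" "X \<in> carrier_mat m k"
  shows "0 \<le> mat_trace (X * P * transpose_mat X)"
  using psd_trace_nonneg psd_congr assms by blast

lemma mat_trace_minus:
  fixes A B :: "real mat"
  assumes "A \<in> carrier_mat m m" "B \<in> carrier_mat m m"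
  shows "mat_trace (A-B) = mat_trace A - mat_trace B"
  using assms by (simp add: mat_trace_def sum_subtractf)

lemma compl_proj:
  fixes P :: "real mat"
  assumes P: "P \<in> carrier_mat m m" "transpose_mat P = P" "P * P = P"
  defines "N \<equiv> 1\<^sub>m m - P"
  shows "N \<in> carrier_mat m m" "transpose_mat N = N" "N * N = N"
proof -
  show N: "N \<in> carrier_mat m m" using P N_def by auto
  show "transpose_mat N = N" using P unfolding N_def by (subst transpose_minus[of _ m m]) auto
  have "N * P = 0\<^sub>m m m"
  proof -
    have "N * P = 1\<^sub>m m * P - P * P" unfolding N_def using P by (subst minus_mult_distrib_mat[of _ m m]) auto
    also have "\<dots> = 0\<^sub>m m m" using P by auto
    finally show ?thesis .
  qed
  hence "N * N = N * 1\<^sub>m m - 0\<^sub>m m m" unfolding N_def using P by (subst mult_minus_distrib_mat) auto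
  thus "N * N = N" using N by auto
qed

lemma proj_trace_le:
  fixes P Y :: "real mat"
  assumes P: "P \<in> carrier_mat m m" "transpose_mat P = P" "P * P = P"
    and Y: "psd_mat m Y"
  shows "mat_trace (P * Y * P) \<le> mat_trace Y"
proof -
  define N where "N = 1\<^sub>m m - P"
  have N: "N \<in> carrier_mat m m" "transpose_mat N = N" "N * N = N"
    using compl_proj[OF P] N_def by auto
  have Yc: "Y \<in> carrier_mat m m" using Y psd_mat_def by auto
  have "N * Y = Y - P * Y" unfolding N_def using P Yc by (subst minus_mult_distrib_mat[of _ m m]) auto
  hence t1: "mat_trace (N * Y) = mat_trace Y - mat_trace (P * Y)"
    using P Yc by (simp add: mat_trace_minus)
  have "mat_trace (P * Y) = mat_trace (P * (P * Y))" using P Yc by (simp flip: assoc_mult_mat[of P m m P m Y m])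
  also have "\<dots> = mat_trace (P * Y * P)" using P Yc mat_trace_comm[of P m m "P*Y"] by simp
  finally have t2: "mat_trace (P * Y) = mat_trace (P * Y * P)" .
  have "mat_trace (N * Y) = mat_trace (N * (N * Y))" using N Yc by (simp flip: assoc_mult_mat[of N m m N m Y m])
  also have "\<dots> = mat_trace (N * Y * N)" using N Yc mat_trace_comm[of N m m "N*Y"] by simp
  also have "\<dots> = mat_trace (N * Y * transpose_mat N)" using N by simp
  finally have "0 \<le> mat_trace (N * Y)" using trace_congr_nonneg[OF Y N(1)] by simp
  thus ?thesis using t1 t2 by simp
qed

lemma mult_entry:
  fixes A B :: "real mat"
  assumes "A \<in> carrier_mat m n" "B \<in> carrier_mat n p" "i < m" "j < p"
  shows "(A*B)$$(i,j) = (\<Sum>l<n. A$$(i,l)*B$$(l,j))"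
  using assms by (simp add: scalar_prod_def atLeast0LessThan)

lemma mv_entry:
  fixes A :: "real mat"
  assumes "A \<in> carrier_mat m n" "v \<in> carrier_vec n" "i < m"
  shows "(A *\<^sub>v v)$i = (\<Sum>l<n. A$$(i,l)*v$l)"
  using assms by (simp add: scalar_prod_def atLeast0LessThan)

lemma sp_sum:
  fixes v w :: "real vec"
  assumes "v \<in> carrier_vec n" "w \<in> carrier_vec n"
  shows "v \<bullet> w = (\<Sum>l<n. v$l*w$l)"
  using assms by (simp add: scalar_prod_def atLeast0LessThan)

lemma sum_sym_swap:
  fixes M :: "nat \<Rightarrow> nat \<Rightarrow> real"
  assumes "\<And>l t. l < m \<Longrightarrow> t < m \<Longrightarrow> M l t = M t l"
  shows "(\<Sum>l<m. a l * (\<Sum>t<m. M l t * b t)) = (\<Sum>t<m. b t * (\<Sum>l<m. M t l * a l))"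
proof -
  have "(\<Sum>l<m. a l * (\<Sum>t<m. M l t * b t)) = (\<Sum>l<m. \<Sum>t<m. a l * M l t * b t)"
    by (simp add: sum_distrib_left mult.assoc)
  also have "\<dots> = (\<Sum>t<m. \<Sum>l<m. a l * M l t * b t)" by (rule sum.swap)
  also have "\<dots> = (\<Sum>t<m. b t * (\<Sum>l<m. M t l * a l))"
    using assms by (auto simp add: sum_distrib_left mult_ac intro!: sum.cong)
  finally show ?thesis .
qed

lemma proj_exists:
  fixes X :: "real mat"
  assumes "X \<in> carrier_mat m k"
  shows "\<exists>P R. P \<in> carrier_mat m m \<and> R \<in> carrier_mat k m \<and> P = X * R \<and> P * X = X \<and>
     transpose_mat P = P \<and> P * P = P"
  using assms
proof (induction k arbitrary: X)
  case 0
  have e1: "X * 0\<^sub>m 0 m = 0\<^sub>m m m" using 0 by (intro eq_matI) (auto simp: mult_entry)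
  have e2: "0\<^sub>m m m * X = X" using 0 by (intro eq_matI) auto
  have e3: "transpose_mat (0\<^sub>m m m) = (0\<^sub>m m m :: real mat)" by (intro eq_matI) auto
  have e4: "0\<^sub>m m m * 0\<^sub>m m m = (0\<^sub>m m m :: real mat)" by simp
  show ?case apply (rule exI[of _ "0\<^sub>m m m"], rule exI[of _ "0\<^sub>m 0 m"])
    apply (intro conjI)
    using e1 e2 e3 e4 by auto
next
  case (Suc k)
  have X: "X \<in> carrier_mat m (Suc k)" by fact
  define X0 where "X0 = mat m k (\<lambda>(i,j). X$$(i,j))"
  have X0: "X0 \<in> carrier_mat m k" unfolding X0_def by simp
  obtain P0 R0 where P0: "P0 \<in> carrier_mat m m" "R0 \<in> carrier_mat k m" "P0 = X0 * R0" "P0 * X0 = X0"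
     "transpose_mat P0 = P0" "P0 * P0 = P0" using Suc.IH[OF X0] by blast
  define p where "p i j = P0 $$ (i,j)" for i j
  define c where "c l = X $$ (l,k)" for l
  define pc where "pc i = (\<Sum>t<m. p i t * c t)" for i
  define u where "u i = c i - pc i" for i
  define s where "s = (\<Sum>l<m. u l * u l)"
  have psym: "p i j = p j i" if "i < m" "j < m" for i j
  proof -
    have "p i j = transpose_mat P0 $$ (i,j)" using P0(5) p_def by simp
    also have "\<dots> = p j i" using that P0(1) p_def by simp
    finally show ?thesis .
  qed
  have pidem: "(\<Sum>l<m. p i l * p l j) = p i j" if "i < m" "j < m" for i j
    using mult_entry[OF P0(1) P0(1) that] P0(6) p_def by simp
  have pX: "(\<Sum>l<m. p i l * X$$(l,j)) = X$$(i,j)" if "i < m" "j < k" for i j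
  proof -
    have "(P0 * X0) $$ (i,j) = X0 $$ (i,j)" using P0(4) by simp
    thus ?thesis using mult_entry[OF P0(1) X0 that] that X0_def p_def by simp
  qed
  have pXR: "p i j = (\<Sum>l<k. X$$(i,l) * R0$$(l,j))" if "i < m" "j < m" for i j
    using mult_entry[OF X0 P0(2) that] P0(3) that X0_def p_def by simp
  have f1: "(\<Sum>l<m. p i l * u l) = 0" if "i < m" for i
  proof -
    have "(\<Sum>l<m. p i l * u l) = pc i - (\<Sum>l<m. p i l * pc l)"
      unfolding u_def pc_def by (simp add: right_diff_distrib sum_subtractf)
    also have "(\<Sum>l<m. p i l * pc l) = (\<Sum>l<m. \<Sum>t<m. p i l * p l t * c t)"
      unfolding pc_def by (simp add: sum_distrib_left mult.assoc)
    also have "\<dots> = (\<Sum>t<m. \<Sum>l<m. p i l * p l t * c t)" by (rule sum.swap)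
    also have "\<dots> = (\<Sum>t<m. p i t * c t)"
      using pidem[OF that] by (simp add: sum_distrib_right[symmetric])
    finally show ?thesis unfolding pc_def by simp
  qed
  have f2: "(\<Sum>l<m. u l * X$$(l,j)) = 0" if "j < k" for j
  proof -
    have "(\<Sum>l<m. u l * X$$(l,j)) = (\<Sum>l<m. u l * (\<Sum>t<m. p l t * X$$(t,j)))"
      using pX that by simp
    also have "\<dots> = (\<Sum>t<m. X$$(t,j) * (\<Sum>l<m. p t l * u l))"
      by (rule sum_sym_swap) (rule psym)
    also have "\<dots> = 0" using f1 by simp
    finally show ?thesis .
  qed
  have f3: "(\<Sum>l<m. u l * c l) = s"
  proof -
    have "(\<Sum>l<m. u l * c l) = s + (\<Sum>l<m. u l * pc l)"
      unfolding s_def by (simp add: u_def algebra_simps sum.distrib[symmetric])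
    also have "(\<Sum>l<m. u l * pc l) = (\<Sum>l<m. u l * (\<Sum>t<m. p l t * c t))" unfolding pc_def ..
    also have "\<dots> = (\<Sum>t<m. c t * (\<Sum>l<m. p t l * u l))"
      by (rule sum_sym_swap) (rule psym)
    also have "\<dots> = 0" using f1 by simp
    finally show ?thesis by simp
  qed
  have Xk: "(\<Sum>l<Suc k. X$$(i,l) * f l) = (\<Sum>l<k. X$$(i,l) * f l) + c i * f k" for i f
    by (simp add: c_def)
  show ?case
  proof (cases "s = 0")
    case True
    have u0: "u l = 0" if "l < m" for l
    proof -
      have "(\<Sum>l<m. u l * u l) = 0" using True s_def by simp
      hence "\<forall>l\<in>{..<m}. u l * u l = 0" by (subst (asm) sum_nonneg_eq_0_iff) auto
      thus ?thesis using that by simp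
    qed
    define R where "R = mat (Suc k) m (\<lambda>(i,j). if i < k then R0$$(i,j) else 0)"
    have R: "R \<in> carrier_mat (Suc k) m" unfolding R_def by simp
    have "P0 = X * R"
    proof (rule eq_matI)
      fix i j assume ij: "i < dim_row (X*R)" "j < dim_col (X*R)"
      hence ij': "i < m" "j < m" using X R by auto
      have "(X*R)$$(i,j) = (\<Sum>l<k. X$$(i,l) * R0$$(l,j))"
        using mult_entry[OF X R ij'] Xk ij' by (simp add: R_def)
      thus "P0 $$ (i,j) = (X*R)$$(i,j)" using pXR[OF ij'] p_def by simp
    qed (use X R P0(1) in auto)
    moreover have "P0 * X = X"
    proof (rule eq_matI)
      fix i j assume ij: "i < dim_row X" "j < dim_col X"
      hence ij': "i < m" "j < Suc k" using X by auto
      have "(P0*X)$$(i,j) = (\<Sum>l<m. p i l * X$$(l,j))" using mult_entry[OF P0(1) X ij'] p_def by simp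
      also have "\<dots> = X$$(i,j)"
      proof (cases "j < k")
        case True then show ?thesis using pX ij' by simp
      next
        case False
        hence "j = k" using ij' by simp
        thus ?thesis using u0[OF ij'(1)] unfolding u_def pc_def c_def by simp
      qed
      finally show "(P0*X)$$(i,j) = X$$(i,j)" .
    qed (use X P0(1) in auto)
    ultimately show ?thesis using P0 R by blast
  next
    case False
    define P where "P = mat m m (\<lambda>(i,j). p i j + u i * u j / s)"
    define rc where "rc i = (\<Sum>t<m. R0$$(i,t) * c t)" for i
    define R where "R = mat (Suc k) m (\<lambda>(i,j). if i < k then R0$$(i,j) - rc i * u j / s else u j / s)"
    have Pc: "P \<in> carrier_mat m m" unfolding P_def by simp
    have R: "R \<in> carrier_mat (Suc k) m" unfolding R_def by simp
    have "P = X * R"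
    proof (rule eq_matI)
      fix i j assume ij: "i < dim_row (X*R)" "j < dim_col (X*R)"
      hence ij': "i < m" "j < m" using X R by auto
      have "(X*R)$$(i,j) = (\<Sum>l<k. X$$(i,l) * (R0$$(l,j) - rc l * u j / s)) + c i * (u j / s)"
        using mult_entry[OF X R ij'] Xk ij' by (simp add: R_def c_def)
      also have "\<dots> = p i j - (\<Sum>l<k. X$$(i,l) * rc l) * u j / s + c i * (u j / s)"
        using pXR[OF ij'] by (simp add: right_diff_distrib sum_subtractf sum_divide_distrib sum_distrib_right mult.assoc)
      also have "(\<Sum>l<k. X$$(i,l) * rc l) = pc i"
      proof -
        have "(\<Sum>l<k. X$$(i,l) * rc l) = (\<Sum>l<k. \<Sum>t<m. X$$(i,l) * R0$$(l,t) * c t)"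
          unfolding rc_def by (simp add: sum_distrib_left mult.assoc)
        also have "\<dots> = (\<Sum>t<m. \<Sum>l<k. X$$(i,l) * R0$$(l,t) * c t)" by (rule sum.swap)
        also have "\<dots> = (\<Sum>t<m. p i t * c t)"
          using pXR[OF ij'(1)] by (simp add: sum_distrib_right)
        finally show ?thesis unfolding pc_def .
      qed
      finally show "P $$ (i,j) = (X*R)$$(i,j)" using ij' unfolding P_def u_def by (simp add: algebra_simps add_divide_distrib diff_divide_distrib)
    qed (use X R Pc in auto)
    moreover have "P * X = X"
    proof (rule eq_matI)
      fix i j assume ij: "i < dim_row X" "j < dim_col X"
      hence ij': "i < m" "j < Suc k" using X by auto
      have "(P*X)$$(i,j) = (\<Sum>l<m. (p i l + u i * u l / s) * X$$(l,j))"
        using mult_entry[OF Pc X ij'] ij' by (simp add: P_def)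
      also have "\<dots> = (\<Sum>l<m. p i l * X$$(l,j)) + u i / s * (\<Sum>l<m. u l * X$$(l,j))"
        by (simp add: algebra_simps sum.distrib sum_distrib_left sum_divide_distrib)
      also have "\<dots> = X$$(i,j)"
      proof (cases "j < k")
        case True then show ?thesis using pX ij' f2 by simp
      next
        case False
        hence "j = k" using ij' by simp
        thus ?thesis using f3 False \<open>s \<noteq> 0\<close> unfolding u_def pc_def c_def by simp
      qed
      finally show "(P*X)$$(i,j) = X$$(i,j)" .
    qed (use X Pc in auto)
    moreover have "transpose_mat P = P"
      by (rule eq_matI) (auto simp: P_def psym mult.commute)
    moreover have "P * P = P"
    proof (rule eq_matI)
      fix i j assume ij: "i < dim_row P" "j < dim_col P"
      hence ij': "i < m" "j < m" using Pc by auto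
      have "(P*P)$$(i,j) = (\<Sum>l<m. (p i l + u i * u l / s) * (p l j + u l * u j / s))"
        using mult_entry[OF Pc Pc ij'] ij' by (simp add: P_def)
      also have "\<dots> = (\<Sum>l<m. p i l * p l j + u i / s * (p j l * u l) + u j / s * (p i l * u l)
             + u i * u j / (s * s) * (u l * u l))"
        using psym ij' by (intro sum.cong) (auto simp: algebra_simps)
      also have "\<dots> = (\<Sum>l<m. p i l * p l j) + u i / s * (\<Sum>l<m. p j l * u l) + u j / s * (\<Sum>l<m. p i l * u l)
             + u i * u j / (s * s) * s"
        unfolding s_def by (simp add: sum.distrib sum_distrib_left)
      also have "\<dots> = P $$ (i,j)" using pidem[OF ij'] f1 ij' \<open>s \<noteq> 0\<close> by (simp add: P_def)
      finally show "(P*P)$$(i,j) = P$$(i,j)" .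
    qed (use Pc in auto)
    ultimately show ?thesis using Pc R by blast
  qed
qed

lemma assoc_dim:
  fixes A B C :: "real mat"
  assumes "dim_col A = dim_row B" "dim_col B = dim_row C"
  shows "A * B * C = A * (B * C)"
  using assms by (intro assoc_mult_mat[of A "dim_row A" "dim_col A" B "dim_col B" C "dim_col C"]) auto

lemma err_back:
  fixes K B C Psi D M M' :: "real mat"
  assumes K: "K \<in> carrier_mat m n" and B: "B \<in> carrier_mat n n'" and C: "C \<in> carrier_mat n' n"
    and Ps: "Psi \<in> carrier_mat n n" "transpose_mat Psi = Psi"
    and D: "D \<in> carrier_mat n' k" and M: "M \<in> carrier_mat k n" and M': "M' \<in> carrier_mat k n'"
    and BC: "B * C * Psi = Psi" and MM: "M * Psi = M' * C * Psi"
  shows "task_err n Psi K (B * D) M = task_err n' (C * Psi * transpose_mat C) (K * B) D M'"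
proof -
  note dims = carrier_matD[OF K] carrier_matD[OF B] carrier_matD[OF C] carrier_matD[OF Ps(1)]
    carrier_matD[OF D] carrier_matD[OF M] carrier_matD[OF M']
  define R where "R = K * (1\<^sub>m n - B * D * M)"
  define R' where "R' = K * B * (1\<^sub>m n' - D * M')"
  have Rc: "R \<in> carrier_mat m n" unfolding R_def using K B D M by auto
  have R'c: "R' \<in> carrier_mat m n'" unfolding R'_def using K B D M' by auto
  have BC': "B * (C * Psi) = Psi" using BC B C Ps by simp
  have MM': "M * Psi = M' * (C * Psi)" using MM M' C Ps by simp
  have e1: "R * Psi = K * Psi - K * (B * (D * (M' * (C * Psi))))"
  proof -
    have I1: "1\<^sub>m n - B * D * M \<in> carrier_mat n n" using B D M by auto
    have "R * Psi = K * ((1\<^sub>m n - B * D * M) * Psi)" unfolding R_def by (rule assoc_mult_mat[OF K I1 Ps(1)])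
    also have "(1\<^sub>m n - B * D * M) * Psi = Psi - B * D * M * Psi"
      using B D M Ps by (subst minus_mult_distrib_mat[of _ n n]) auto
    also have "B * D * M * Psi = B * (D * (M * Psi))" using B D M Ps using carrier_matD[OF B] carrier_matD[OF D] carrier_matD[OF M] carrier_matD[OF Ps(1)] by (simp add: assoc_dim)
    also have "\<dots> = B * (D * (M' * (C * Psi)))" using MM' by simp
    also have "K * (Psi - B * (D * (M' * (C * Psi)))) = K * Psi - K * (B * (D * (M' * (C * Psi))))"
      using K B D M' C Ps by (subst mult_minus_distrib_mat[of _ m n]) auto
    finally show ?thesis .
  qed
  have e2: "R' * (C * Psi) = K * Psi - K * (B * (D * (M' * (C * Psi))))"
  proof -
    have I1: "1\<^sub>m n' - D * M' \<in> carrier_mat n' n'" using D M' by auto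
    have "R' * (C * Psi) = K * B * ((1\<^sub>m n' - D * M') * (C * Psi))" unfolding R'_def
      using K B C Ps by (intro assoc_mult_mat[OF _ I1]) auto
    also have "(1\<^sub>m n' - D * M') * (C * Psi) = C * Psi - D * (M' * (C * Psi))"
      using C D M' Ps by (subst minus_mult_distrib_mat[of _ n' n']) (auto simp: assoc_dim)
    also have "K * B * (C * Psi - D * (M' * (C * Psi))) = K * B * (C * Psi) - K * B * (D * (M' * (C * Psi)))"
      using K B D M' C Ps by (subst mult_minus_distrib_mat[of _ m n']) auto
    also have "K * B * (C * Psi) = K * Psi" using BC' dims by (simp add: assoc_dim)
    also have "K * B * (D * (M' * (C * Psi))) = K * (B * (D * (M' * (C * Psi))))" using dims by (simp add: assoc_dim)
    finally show ?thesis .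
  qed
  have RP: "R * Psi = R' * (C * Psi)" using e1 e2 by simp
  have "R * Psi * transpose_mat R = R' * (C * Psi) * transpose_mat R" using RP by simp
  also have "\<dots> = R' * (C * (Psi * transpose_mat R))" using dims carrier_matD[OF Rc] carrier_matD[OF R'c] by (simp add: assoc_dim)
  also have "Psi * transpose_mat R = transpose_mat (R * Psi)"
    using transpose_mult[OF Rc Ps(1)] Ps by simp
  also have "\<dots> = transpose_mat (R' * (C * Psi))" using RP by simp
  also have "\<dots> = Psi * transpose_mat C * transpose_mat R'"
    using transpose_mult[OF R'c, of "C * Psi" n] transpose_mult[OF C Ps(1)] C Ps by simp
  also have "R' * (C * (Psi * transpose_mat C * transpose_mat R')) = R' * (C * Psi * transpose_mat C) * transpose_mat R'"
    using dims carrier_matD[OF R'c] by (simp add: assoc_dim)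
  finally have "R * Psi * transpose_mat R = R' * (C * Psi * transpose_mat C) * transpose_mat R'" .
  thus ?thesis unfolding task_err_def Let_def R_def R'_def by simp
qed

lemma err_fwd:
  fixes K B Psi Psi' D M Q P :: "real mat"
  assumes K: "K \<in> carrier_mat m n" and B: "B \<in> carrier_mat n n'"
    and Ps': "psd_mat n' Psi'" and PsB: "Psi = B * Psi' * transpose_mat B"
    and D: "D \<in> carrier_mat n k" and M: "M \<in> carrier_mat k n" and Q: "Q \<in> carrier_mat n' n"
    and P: "P \<in> carrier_mat m m" "transpose_mat P = P" "P * P = P"
    and KBQ: "K * B * Q = P * K" and PKB: "P * (K * B) = K * B"
  shows "task_err n' Psi' (K * B) (Q * D) (M * B) \<le> task_err n Psi K D M"
proof -
  have Psc: "Psi' \<in> carrier_mat n' n'" using Ps' psd_mat_def by auto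
  note dims = carrier_matD[OF K] carrier_matD[OF B] carrier_matD[OF Psc] carrier_matD[OF P(1)]
    carrier_matD[OF D] carrier_matD[OF M] carrier_matD[OF Q]
  define R where "R = K * (1\<^sub>m n - D * M)"
  define R' where "R' = K * B * (1\<^sub>m n' - Q * D * (M * B))"
  define X where "X = K * B - K * (D * (M * B))"
  have Rc: "R \<in> carrier_mat m n" unfolding R_def using K D M by auto
  have Xc: "X \<in> carrier_mat m n'" unfolding X_def using K B D M by auto
  have RB: "R * B = X"
  proof -
    have I1: "1\<^sub>m n - D * M \<in> carrier_mat n n" using D M by auto
    have "R * B = K * ((1\<^sub>m n - D * M) * B)" unfolding R_def by (rule assoc_mult_mat[OF K I1 B])
    also have "(1\<^sub>m n - D * M) * B = B - D * (M * B)"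
      using B D M by (subst minus_mult_distrib_mat[of _ n n]) (auto simp: assoc_dim dims)
    also have "K * (B - D * (M * B)) = K * B - K * (D * (M * B))"
      using K B D M by (subst mult_minus_distrib_mat[of _ m n]) auto
    finally show ?thesis unfolding X_def .
  qed
  have R'X: "R' = P * X"
  proof -
    have I1: "1\<^sub>m n' - Q * D * (M * B) \<in> carrier_mat n' n'" using Q D M B by auto
    have "R' = K * B * 1\<^sub>m n' - K * B * (Q * D * (M * B))"
      unfolding R'_def using K B Q D M by (subst mult_minus_distrib_mat[of _ m n']) auto
    also have "K * B * (Q * D * (M * B)) = (K * B * Q) * (D * (M * B))"
      using dims by (simp add: assoc_dim)
    also have "\<dots> = P * (K * (D * (M * B)))" using KBQ dims by (simp add: assoc_dim)
    also have "K * B * 1\<^sub>m n' = P * (K * B)" using PKB K B by simp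
    also have "P * (K * B) - P * (K * (D * (M * B))) = P * X"
      unfolding X_def using P K B D M by (subst mult_minus_distrib_mat[of _ m m]) auto
    finally show ?thesis .
  qed
  have old: "R * Psi * transpose_mat R = X * Psi' * transpose_mat X"
  proof -
    have "R * Psi * transpose_mat R = (R * B) * Psi' * (transpose_mat B * transpose_mat R)"
      unfolding PsB using dims carrier_matD[OF Rc] by (simp add: assoc_dim)
    also have "transpose_mat B * transpose_mat R = transpose_mat (R * B)"
      using transpose_mult[OF Rc B] by simp
    finally show ?thesis using RB by simp
  qed
  have new: "R' * Psi' * transpose_mat R' = P * (X * Psi' * transpose_mat X) * P"
  proof -
    have "transpose_mat R' = transpose_mat X * P" using R'X transpose_mult[OF P(1) Xc] P(2) by simp
    thus ?thesis using R'X dims carrier_matD[OF Xc] by (simp add: assoc_dim)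
  qed
  have Y: "psd_mat m (X * Psi' * transpose_mat X)" by (rule psd_congr[OF Ps' Xc])
  have "mat_trace (R' * Psi' * transpose_mat R') \<le> mat_trace (R * Psi * transpose_mat R)"
    unfolding old new by (rule proj_trace_le[OF P Y])
  thus ?thesis unfolding task_err_def Let_def R_def R'_def by simp
qed

lemma sel1_carrier[simp]: "sel1 n a \<in> carrier_mat a n" by (simp add: sel1_def)
lemma sel2_carrier[simp]: "sel2 n b \<in> carrier_mat b n" by (simp add: sel2_def)
lemma sel1_dims[simp]: "dim_row (sel1 n a) = a" "dim_col (sel1 n a) = n" by (simp_all add: sel1_def)
lemma sel2_dims[simp]: "dim_row (sel2 n b) = b" "dim_col (sel2 n b) = n" by (simp_all add: sel2_def)

lemma vstack_carrier[simp]: "vstack A B \<in> carrier_mat (dim_row A + dim_row B) (dim_col A)"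
  by (simp add: vstack_def)
lemma vstack_dims[simp]: "dim_row (vstack A B) = dim_row A + dim_row B" "dim_col (vstack A B) = dim_col A"
  by (simp_all add: vstack_def)

lemma vstack_mult:
  fixes A B X :: "real mat"
  assumes "A \<in> carrier_mat r1 c" "B \<in> carrier_mat r2 c" "X \<in> carrier_mat c d"
  shows "vstack A B * X = vstack (A * X) (B * X)"
proof (rule eq_matI)
  fix i j assume ij: "i < dim_row (vstack (A * X) (B * X))" "j < dim_col (vstack (A * X) (B * X))"
  hence ij': "i < r1 + r2" "j < d" using assms by auto
  have "(vstack A B * X) $$ (i,j) = (\<Sum>l<c. vstack A B $$ (i,l) * X $$ (l,j))"
    using mult_entry[of "vstack A B" "r1+r2" c X d i j] assms ij' by (simp add: vstack_def)
  also have "\<dots> = vstack (A * X) (B * X) $$ (i,j)"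
    using assms ij' by (auto simp: vstack_def scalar_prod_def atLeast0LessThan)
  finally show "(vstack A B * X) $$ (i,j) = vstack (A * X) (B * X) $$ (i,j)" .
qed (use assms in auto)

lemma sel1_entry: "i < a \<Longrightarrow> l < n \<Longrightarrow> sel1 n a $$ (i,l) = (if l = i then 1 else 0)"
  by (simp add: sel1_def)
lemma sel2_entry: "i < b \<Longrightarrow> l < n \<Longrightarrow> sel2 n b $$ (i,l) = (if l = n - b + i then 1 else 0)"
  by (simp add: sel2_def)

lemma sum_delta_l: "(\<Sum>l<(n::nat). (if l = i then 1 else 0) * (f l::real)) = (if i < n then f i else 0)"
  by (induction n) (auto simp: less_Suc_eq)
lemma sum_delta_r: "(\<Sum>t<(n::nat). (f t::real) * (if l = t then 1 else 0)) = (if l < n then f l else 0)"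
  by (induction n) (auto simp: less_Suc_eq)

lemma sel1_B:
  fixes B :: "real mat"
  assumes B: "B \<in> carrier_mat n n'" and a: "a \<le> n" "a' \<le> n'"
    and Z1: "\<And>i l. i < a \<Longrightarrow> l < n' \<Longrightarrow> a' \<le> l \<Longrightarrow> B $$ (i,l) = 0"
  shows "mat a a' (\<lambda>(i,t). B $$ (i,t)) * sel1 n' a' = sel1 n a * B"
proof (rule eq_matI)
  fix i l assume il: "i < dim_row (sel1 n a * B)" "l < dim_col (sel1 n a * B)"
  hence il': "i < a" "l < n'" using B by auto
  have "(mat a a' (\<lambda>(i,t). B $$ (i,t)) * sel1 n' a') $$ (i,l) = (\<Sum>t<a'. B $$ (i,t) * (if l = t then 1 else 0))"
    using mult_entry[of "mat a a' (\<lambda>(i,t). B $$ (i,t))" a a' "sel1 n' a'" n' i l] il' a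
    by (simp add: sel1_entry)
  also have "\<dots> = B $$ (i,l)" using Z1[of i l] il' by (simp add: sum_delta_r)
  also have "\<dots> = (sel1 n a * B) $$ (i,l)"
    using mult_entry[of "sel1 n a" a n B n' i l] il' a B by (simp add: sel1_entry sum_delta_l)
  finally show "(mat a a' (\<lambda>(i,t). B $$ (i,t)) * sel1 n' a') $$ (i,l) = (sel1 n a * B) $$ (i,l)" .
qed (use B in auto)

lemma sel2_B:
  fixes B :: "real mat"
  assumes B: "B \<in> carrier_mat n n'" and b: "b \<le> n" "b' \<le> n'"
    and Z2: "\<And>i l. i < n \<Longrightarrow> n - b \<le> i \<Longrightarrow> l < n' - b' \<Longrightarrow> B $$ (i,l) = 0"
  shows "mat b b' (\<lambda>(i,t). B $$ (n - b + i, n' - b' + t)) * sel2 n' b' = sel2 n b * B"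
proof (rule eq_matI)
  fix i l assume il: "i < dim_row (sel2 n b * B)" "l < dim_col (sel2 n b * B)"
  hence il': "i < b" "l < n'" using B by auto
  have "(mat b b' (\<lambda>(i,t). B $$ (n - b + i, n' - b' + t)) * sel2 n' b') $$ (i,l)
      = (\<Sum>t<b'. B $$ (n - b + i, n' - b' + t) * (if l = n' - b' + t then 1 else 0))"
    using mult_entry[of "mat b b' (\<lambda>(i,t). B $$ (n - b + i, n' - b' + t))" b b' "sel2 n' b'" n' i l] il' b
    by (simp add: sel2_entry)
  also have "\<dots> = (\<Sum>t<b'. if t = l - (n' - b') then (if n' - b' \<le> l then B $$ (n - b + i, l) else 0) else 0)"
    by (intro sum.cong) auto
  also have "\<dots> = (if n' - b' \<le> l then B $$ (n - b + i, l) else 0)" using il' b by (subst sum.delta) auto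
  also have "\<dots> = B $$ (n - b + i, l)" using Z2[of "n - b + i" l] il' b by auto
  also have "\<dots> = (sel2 n b * B) $$ (i,l)"
  proof -
    have "(sel2 n b * B) $$ (i,l) = (\<Sum>q<n. (if q = n - b + i then 1 else 0) * B $$ (q,l))"
      using mult_entry[of "sel2 n b" b n B n' i l] il' b B by (simp add: sel2_entry)
    also have "\<dots> = B $$ (n - b + i, l)" using il' b by (subst sum_delta_l) auto
    finally show ?thesis by simp
  qed
  finally show "(mat b b' (\<lambda>(i,t). B $$ (n - b + i, n' - b' + t)) * sel2 n' b') $$ (i,l) = (sel2 n b * B) $$ (i,l)" .
qed (use B in auto)

lemma scheme_okD:
  assumes "scheme_ok n a b Z s"
  shows "E13 s \<in> carrier_mat Z a" "E15 s \<in> carrier_mat Z a" "E24 s \<in> carrier_mat Z b"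
    "E25 s \<in> carrier_mat Z b" "E56 s \<in> carrier_mat Z (2 * Z)" "D3 s \<in> carrier_mat n (2 * Z)"
    "D4 s \<in> carrier_mat n (2 * Z)"
  using assms unfolding scheme_ok_def by auto

lemma msg_carrier:
  assumes "scheme_ok n a b Z s"
  shows "msg3 n a b s \<in> carrier_mat (2 * Z) n" "msg4 n a b s \<in> carrier_mat (2 * Z) n"
  using scheme_okD[OF assms] unfolding msg3_def msg4_def enc56_def
  by (auto simp: carrier_matD intro!: carrier_matI)

lemma msg_mult:
  assumes ok: "scheme_ok n a b Z s" and X: "X \<in> carrier_mat n d"
  shows "msg3 n a b s * X = vstack (E13 s * (sel1 n a * X)) (E56 s * vstack (E15 s * (sel1 n a * X)) (E25 s * (sel2 n b * X)))"
    "msg4 n a b s * X = vstack (E24 s * (sel2 n b * X)) (E56 s * vstack (E15 s * (sel1 n a * X)) (E25 s * (sel2 n b * X)))"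
proof -
  note c = scheme_okD[OF ok]
  note cd = c[THEN carrier_matD(1)] c[THEN carrier_matD(2)]
  have v: "vstack (E15 s * sel1 n a) (E25 s * sel2 n b) \<in> carrier_mat (2 * Z) n"
    using c by (auto simp: carrier_matD intro!: carrier_matI)
  have enc: "enc56 n a b s * X = E56 s * vstack (E15 s * (sel1 n a * X)) (E25 s * (sel2 n b * X))"
  proof -
    have "enc56 n a b s * X = E56 s * (vstack (E15 s * sel1 n a) (E25 s * sel2 n b) * X)"
      unfolding enc56_def using c(5) v X by simp
    also have "vstack (E15 s * sel1 n a) (E25 s * sel2 n b) * X = vstack (E15 s * sel1 n a * X) (E25 s * sel2 n b * X)"
      using c X by (intro vstack_mult[of _ Z n _ Z]) auto
    also have "E15 s * sel1 n a * X = E15 s * (sel1 n a * X)" using cd carrier_matD[OF X] by (simp add: assoc_dim)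
    also have "E25 s * sel2 n b * X = E25 s * (sel2 n b * X)" using cd carrier_matD[OF X] by (simp add: assoc_dim)
    finally show ?thesis .
  qed
  have ec: "enc56 n a b s \<in> carrier_mat Z n" unfolding enc56_def using c(5) v by auto
  show "msg3 n a b s * X = vstack (E13 s * (sel1 n a * X)) (E56 s * vstack (E15 s * (sel1 n a * X)) (E25 s * (sel2 n b * X)))"
    unfolding msg3_def using c X ec enc cd carrier_matD[OF X] by (subst vstack_mult[of _ Z n _ Z]) (auto simp: assoc_dim)
  show "msg4 n a b s * X = vstack (E24 s * (sel2 n b * X)) (E56 s * vstack (E15 s * (sel1 n a * X)) (E25 s * (sel2 n b * X)))"
    unfolding msg4_def using c X ec enc cd carrier_matD[OF X] by (subst vstack_mult[of _ Z n _ Z]) (auto simp: assoc_dim)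
qed

definition fwdT where
  "fwdT A1 A2 Z Q3 Q4 = lin_transform A1 A1 A2 A2 (1\<^sub>m (2 * Z)) Q3 Q4"
definition bwdT where
  "bwdT G1 G2 Z B = lin_transform G1 G1 G2 G2 (1\<^sub>m (2 * Z)) B B"

lemma fwd_ok:
  assumes ok: "scheme_ok n a b Z s" and A: "A1 \<in> carrier_mat a a'" "A2 \<in> carrier_mat b b'"
    and Q: "Q3 \<in> carrier_mat n' n" "Q4 \<in> carrier_mat n' n"
  shows "scheme_ok n' a' b' Z (fwdT A1 A2 Z Q3 Q4 s)"
  using scheme_okD[OF ok] A Q unfolding scheme_ok_def fwdT_def lin_transform_def by auto

lemma bwd_ok:
  assumes ok: "scheme_ok n' a' b' Z s" and G: "G1 \<in> carrier_mat a' a" "G2 \<in> carrier_mat b' b"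
    and B: "B \<in> carrier_mat n n'"
  shows "scheme_ok n a b Z (bwdT G1 G2 Z B s)"
  using scheme_okD[OF ok] G B unfolding scheme_ok_def bwdT_def lin_transform_def by auto

lemma fwd_msg:
  assumes ok: "scheme_ok n a b Z s" and A: "A1 \<in> carrier_mat a a'" "A2 \<in> carrier_mat b b'"
    and Q: "Q3 \<in> carrier_mat n' n" "Q4 \<in> carrier_mat n' n" and B: "B \<in> carrier_mat n n'"
    and S1: "A1 * sel1 n' a' = sel1 n a * B" and S2: "A2 * sel2 n' b' = sel2 n b * B"
  shows "msg3 n' a' b' (fwdT A1 A2 Z Q3 Q4 s) = msg3 n a b s * B"
    "msg4 n' a' b' (fwdT A1 A2 Z Q3 Q4 s) = msg4 n a b s * B"
proof -
  let ?t = "fwdT A1 A2 Z Q3 Q4 s"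
  have ok': "scheme_ok n' a' b' Z ?t" by (rule fwd_ok[OF ok A Q])
  note c = scheme_okD[OF ok]
  note cd = c[THEN carrier_matD(1)] c[THEN carrier_matD(2)]
  have id: "msg3 n' a' b' ?t = msg3 n' a' b' ?t * 1\<^sub>m n'" "msg4 n' a' b' ?t = msg4 n' a' b' ?t * 1\<^sub>m n'"
    using msg_carrier[OF ok'] by auto
  have e1: "E13 s * A1 * sel1 n' a' = E13 s * (sel1 n a * B)"
    using cd carrier_matD[OF A(1)] carrier_matD[OF A(2)] by (simp add: assoc_dim S1[symmetric])
  have e2: "E15 s * A1 * sel1 n' a' = E15 s * (sel1 n a * B)"
    using cd carrier_matD[OF A(1)] carrier_matD[OF A(2)] by (simp add: assoc_dim S1[symmetric])
  have e3: "E25 s * A2 * sel2 n' b' = E25 s * (sel2 n b * B)"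
    using cd carrier_matD[OF A(1)] carrier_matD[OF A(2)] by (simp add: assoc_dim S2[symmetric])
  have e4: "E24 s * A2 * sel2 n' b' = E24 s * (sel2 n b * B)"
    using cd carrier_matD[OF A(1)] carrier_matD[OF A(2)] by (simp add: assoc_dim S2[symmetric])
  have e5: "E56 s * 1\<^sub>m (2 * Z) = E56 s" using c by simp
  show "msg3 n' a' b' ?t = msg3 n a b s * B"
    apply (subst id(1))
    apply (subst msg_mult(1)[OF ok' one_carrier_mat])
    apply (subst msg_mult(1)[OF ok B])
    by (simp add: fwdT_def lin_transform_def e1 e2 e3 e5)
  show "msg4 n' a' b' ?t = msg4 n a b s * B"
    apply (subst id(2))
    apply (subst msg_mult(2)[OF ok' one_carrier_mat])
    apply (subst msg_mult(2)[OF ok B])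
    by (simp add: fwdT_def lin_transform_def e4 e2 e3 e5)
qed

lemma bwd_msg:
  assumes ok: "scheme_ok n' a' b' Z s" and G: "G1 \<in> carrier_mat a' a" "G2 \<in> carrier_mat b' b"
    and B: "B \<in> carrier_mat n n'" and C: "C \<in> carrier_mat n' n" and Ps: "Psi \<in> carrier_mat n n"
    and S1: "G1 * sel1 n a * Psi = sel1 n' a' * C * Psi" and S2: "G2 * sel2 n b * Psi = sel2 n' b' * C * Psi"
  shows "msg3 n a b (bwdT G1 G2 Z B s) * Psi = msg3 n' a' b' s * C * Psi"
    "msg4 n a b (bwdT G1 G2 Z B s) * Psi = msg4 n' a' b' s * C * Psi"
proof -
  let ?t = "bwdT G1 G2 Z B s"
  have ok': "scheme_ok n a b Z ?t" by (rule bwd_ok[OF ok G B])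
  note c = scheme_okD[OF ok]
  note cd = c[THEN carrier_matD(1)] c[THEN carrier_matD(2)]
  have CP: "C * Psi \<in> carrier_mat n' n" using C Ps by auto
  have id: "msg3 n' a' b' s * C * Psi = msg3 n' a' b' s * (C * Psi)" "msg4 n' a' b' s * C * Psi = msg4 n' a' b' s * (C * Psi)"
    using msg_carrier[OF ok] C Ps by auto
  have S1': "G1 * (sel1 n a * Psi) = sel1 n' a' * (C * Psi)" using S1 carrier_matD[OF G(1)] carrier_matD[OF C] carrier_matD[OF Ps] by (simp add: assoc_dim)
  have S2': "G2 * (sel2 n b * Psi) = sel2 n' b' * (C * Psi)" using S2 carrier_matD[OF G(2)] carrier_matD[OF C] carrier_matD[OF Ps] by (simp add: assoc_dim)
  have e1: "E13 s * G1 * (sel1 n a * Psi) = E13 s * (sel1 n' a' * (C * Psi))"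
    using cd carrier_matD[OF G(1)] carrier_matD[OF Ps] by (simp add: assoc_dim S1'[symmetric])
  have e2: "E15 s * G1 * (sel1 n a * Psi) = E15 s * (sel1 n' a' * (C * Psi))"
    using cd carrier_matD[OF G(1)] carrier_matD[OF Ps] by (simp add: assoc_dim S1'[symmetric])
  have e3: "E25 s * G2 * (sel2 n b * Psi) = E25 s * (sel2 n' b' * (C * Psi))"
    using cd carrier_matD[OF G(2)] carrier_matD[OF Ps] by (simp add: assoc_dim S2'[symmetric])
  have e4: "E24 s * G2 * (sel2 n b * Psi) = E24 s * (sel2 n' b' * (C * Psi))"
    using cd carrier_matD[OF G(2)] carrier_matD[OF Ps] by (simp add: assoc_dim S2'[symmetric])
  have e5: "E56 s * 1\<^sub>m (2 * Z) = E56 s" using c by simp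
  show "msg3 n a b ?t * Psi = msg3 n' a' b' s * C * Psi"
    apply (subst id(1))
    apply (subst msg_mult(1)[OF ok' Ps])
    apply (subst msg_mult(1)[OF ok CP])
    by (simp add: bwdT_def lin_transform_def e1 e2 e3 e5)
  show "msg4 n a b ?t * Psi = msg4 n' a' b' s * C * Psi"
    apply (subst id(2))
    apply (subst msg_mult(2)[OF ok' Ps])
    apply (subst msg_mult(2)[OF ok CP])
    by (simp add: bwdT_def lin_transform_def e4 e2 e3 e5)
qed

lemma abstract_equiv:
  fixes fo fn :: "scheme \<Rightarrow> real"
  assumes T: "\<And>s. oko s \<Longrightarrow> okn (T s)" and U: "\<And>s. okn s \<Longrightarrow> oko (U s)"
    and LT: "\<And>s. oko s \<Longrightarrow> fn (T s) \<le> fo s" and LU: "\<And>s. okn s \<Longrightarrow> fo (U s) = fn s"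
    and nn: "\<And>s. oko s \<Longrightarrow> 0 \<le> fo s" and ex: "oko s0"
  shows "Inf {fo s | s. oko s} = Inf {fn s | s. okn s}"
    "\<And>s. oko s \<Longrightarrow> (\<forall>s'. oko s' \<longrightarrow> fo s \<le> fo s') \<Longrightarrow> okn (T s) \<and> (\<forall>s'. okn s' \<longrightarrow> fn (T s) \<le> fn s')"
    "\<And>s. okn s \<Longrightarrow> (\<forall>s'. okn s' \<longrightarrow> fn s \<le> fn s') \<Longrightarrow> oko (U s) \<and> (\<forall>s'. oko s' \<longrightarrow> fo (U s) \<le> fo s')"
proof -
  let ?SO = "{fo s | s. oko s}" and ?SN = "{fn s | s. okn s}"
  have sub: "?SN \<subseteq> ?SO" using U LU by (auto, metis)
  have bo: "bdd_below ?SO" using nn by (auto intro!: bdd_belowI[of _ 0])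
  have bn: "bdd_below ?SN" using bdd_below_mono[OF bo sub] .
  have neN: "?SN \<noteq> {}" using T[OF ex] by auto
  have neO: "?SO \<noteq> {}" using ex by auto
  have 1: "Inf ?SO \<le> Inf ?SN" by (rule cInf_superset_mono[OF neN bo sub])
  have 2: "Inf ?SN \<le> Inf ?SO"
  proof (rule cInf_greatest[OF neO])
    fix x assume "x \<in> ?SO"
    then obtain s where s: "oko s" "x = fo s" by auto
    have "Inf ?SN \<le> fn (T s)" using T[OF s(1)] by (intro cInf_lower[OF _ bn]) auto
    thus "Inf ?SN \<le> x" using LT[OF s(1)] s(2) by simp
  qed
  show "Inf ?SO = Inf ?SN" using 1 2 by simp
  show "okn (T s) \<and> (\<forall>s'. okn s' \<longrightarrow> fn (T s) \<le> fn s')" if "oko s" "\<forall>s'. oko s' \<longrightarrow> fo s \<le> fo s'" for s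
  proof (intro conjI allI impI)
    show "okn (T s)" using T that by simp
    fix s' assume "okn s'"
    have "fn (T s) \<le> fo s" using LT that by simp
    also have "\<dots> \<le> fo (U s')" using that U[OF \<open>okn s'\<close>] by simp
    also have "\<dots> = fn s'" using LU[OF \<open>okn s'\<close>] .
    finally show "fn (T s) \<le> fn s'" .
  qed
  show "oko (U s) \<and> (\<forall>s'. oko s' \<longrightarrow> fo (U s) \<le> fo s')" if "okn s" "\<forall>s'. okn s' \<longrightarrow> fn s \<le> fn s'" for s
  proof (intro conjI allI impI)
    show "oko (U s)" using U that by simp
    fix s' assume "oko s'"
    have "fo (U s) = fn s" using LU that by simp
    also have "\<dots> \<le> fn (T s')" using that T[OF \<open>oko s'\<close>] by simp
    also have "\<dots> \<le> fo s'" using LT[OF \<open>oko s'\<close>] .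
    finally show "fo (U s) \<le> fo s'" .
  qed
qed

definition equivP where
  "equivP Z n a b Psi K3 K4 n' a' b' Psi' K3' K4' \<longleftrightarrow>
    opt_loss n Psi a b Z K3 K4 = opt_loss n' Psi' a' b' Z K3' K4' \<and>
    (\<exists>P13 P15 P24 P25 P56 Q3 Q4. P13 \<in> carrier_mat a a' \<and> P15 \<in> carrier_mat a a' \<and>
       P24 \<in> carrier_mat b b' \<and> P25 \<in> carrier_mat b b' \<and> P56 \<in> carrier_mat (2*Z) (2*Z) \<and>
       Q3 \<in> carrier_mat n' n \<and> Q4 \<in> carrier_mat n' n \<and>
       (\<forall>s. optimal_scheme n Psi a b Z K3 K4 s \<longrightarrow>
          optimal_scheme n' Psi' a' b' Z K3' K4' (lin_transform P13 P15 P24 P25 P56 Q3 Q4 s))) \<and>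
    (\<exists>P13 P15 P24 P25 P56 Q3 Q4. P13 \<in> carrier_mat a' a \<and> P15 \<in> carrier_mat a' a \<and>
       P24 \<in> carrier_mat b' b \<and> P25 \<in> carrier_mat b' b \<and> P56 \<in> carrier_mat (2*Z) (2*Z) \<and>
       Q3 \<in> carrier_mat n n' \<and> Q4 \<in> carrier_mat n n' \<and>
       (\<forall>s. optimal_scheme n' Psi' a' b' Z K3' K4' s \<longrightarrow>
          optimal_scheme n Psi a b Z K3 K4 (lin_transform P13 P15 P24 P25 P56 Q3 Q4 s)))"

lemma task_err_nonneg:
  assumes "psd_mat n Psi" "K \<in> carrier_mat m n" "D \<in> carrier_mat n k" "M \<in> carrier_mat k n"
  shows "0 \<le> task_err n Psi K D M"
  unfolding task_err_def Let_def using assms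
  by (intro trace_congr_nonneg) auto

lemma total_loss_nonneg:
  assumes "psd_mat n Psi" "K3 \<in> carrier_mat m3 n" "K4 \<in> carrier_mat m4 n" "scheme_ok n a b Z s"
  shows "0 \<le> total_loss n Psi a b K3 K4 s"
  unfolding total_loss_def using assms scheme_okD[OF assms(4)] msg_carrier[OF assms(4)]
  by (intro add_nonneg_nonneg task_err_nonneg) auto

lemma scheme_ok_ex: "scheme_ok n a b Z \<lparr>E13 = 0\<^sub>m Z a, E15 = 0\<^sub>m Z a, E24 = 0\<^sub>m Z b, E25 = 0\<^sub>m Z b,
      E56 = 0\<^sub>m Z (2*Z), D3 = 0\<^sub>m n (2*Z), D4 = 0\<^sub>m n (2*Z)\<rparr>"
  unfolding scheme_ok_def by simp

lemma step_equiv: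
  fixes Psi B C G1 G2 K3 K4 :: "real mat"
  assumes psd: "psd_mat n Psi" and dims: "a \<le> n" "b \<le> n" "a' \<le> n'" "b' \<le> n'"
    and B: "B \<in> carrier_mat n n'" and C: "C \<in> carrier_mat n' n"
    and G: "G1 \<in> carrier_mat a' a" "G2 \<in> carrier_mat b' b"
    and BC: "B * C * Psi = Psi"
    and Z1: "\<And>i l. i < a \<Longrightarrow> l < n' \<Longrightarrow> a' \<le> l \<Longrightarrow> B $$ (i,l) = 0"
    and Z2: "\<And>i l. i < n \<Longrightarrow> n - b \<le> i \<Longrightarrow> l < n' - b' \<Longrightarrow> B $$ (i,l) = 0"
    and S1: "G1 * sel1 n a * Psi = sel1 n' a' * C * Psi"
    and S2: "G2 * sel2 n b * Psi = sel2 n' b' * C * Psi"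
    and K: "K3 \<in> carrier_mat m3 n" "K4 \<in> carrier_mat m4 n"
  shows "equivP Z n a b Psi K3 K4 n' a' b' (C * Psi * transpose_mat C) (K3 * B) (K4 * B)"
proof -
  define Psi' where "Psi' = C * Psi * transpose_mat C"
  have Ps: "Psi \<in> carrier_mat n n" "transpose_mat Psi = Psi" using psd psd_mat_def by auto
  have psd': "psd_mat n' Psi'" unfolding Psi'_def by (rule psd_congr[OF psd C])
  have PsB: "Psi = B * Psi' * transpose_mat B"
  proof -
    have "B * Psi' * transpose_mat B = (B * C * Psi) * (transpose_mat C * transpose_mat B)"
      unfolding Psi'_def using carrier_matD[OF B] carrier_matD[OF C] carrier_matD[OF Ps(1)]
      by (simp add: assoc_dim)
    also have "transpose_mat C * transpose_mat B = transpose_mat (B * C)"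
      using transpose_mult[OF B C] by simp
    also have "B * C * Psi * transpose_mat (B * C) = Psi * transpose_mat (B * C)" using BC by simp
    also have "\<dots> = transpose_mat (B * C * Psi)"
      using transpose_mult[of "B * C" n n Psi n] B C Ps by simp
    finally show ?thesis using BC Ps by simp
  qed
  define A1 where "A1 = mat a a' (\<lambda>(i,t). B $$ (i,t))"
  define A2 where "A2 = mat b b' (\<lambda>(i,t). B $$ (n - b + i, n' - b' + t))"
  have A: "A1 \<in> carrier_mat a a'" "A2 \<in> carrier_mat b b'" unfolding A1_def A2_def by auto
  have SA1: "A1 * sel1 n' a' = sel1 n a * B" unfolding A1_def by (rule sel1_B[OF B dims(1,3) Z1])
  have SA2: "A2 * sel2 n' b' = sel2 n b * B" unfolding A2_def by (rule sel2_B[OF B dims(2,4) Z2])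
  have KB: "K3 * B \<in> carrier_mat m3 n'" "K4 * B \<in> carrier_mat m4 n'" using K B by auto
  obtain P3 R3 where P3: "P3 \<in> carrier_mat m3 m3" "R3 \<in> carrier_mat n' m3" "P3 = K3 * B * R3"
    "P3 * (K3 * B) = K3 * B" "transpose_mat P3 = P3" "P3 * P3 = P3" using proj_exists[OF KB(1)] by blast
  obtain P4 R4 where P4: "P4 \<in> carrier_mat m4 m4" "R4 \<in> carrier_mat n' m4" "P4 = K4 * B * R4"
    "P4 * (K4 * B) = K4 * B" "transpose_mat P4 = P4" "P4 * P4 = P4" using proj_exists[OF KB(2)] by blast
  define Q3 where "Q3 = R3 * K3"
  define Q4 where "Q4 = R4 * K4"
  have Q: "Q3 \<in> carrier_mat n' n" "Q4 \<in> carrier_mat n' n" unfolding Q3_def Q4_def using P3 P4 K by auto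
  have KBQ3: "K3 * B * Q3 = P3 * K3" unfolding Q3_def P3(3)
    using carrier_matD[OF K(1)] carrier_matD[OF B] carrier_matD[OF P3(2)] by (simp add: assoc_dim)
  have KBQ4: "K4 * B * Q4 = P4 * K4" unfolding Q4_def P4(3)
    using carrier_matD[OF K(2)] carrier_matD[OF B] carrier_matD[OF P4(2)] by (simp add: assoc_dim)
  define T where "T = fwdT A1 A2 Z Q3 Q4"
  define U where "U = bwdT G1 G2 Z B"
  let ?oko = "scheme_ok n a b Z" and ?okn = "scheme_ok n' a' b' Z"
  let ?fo = "total_loss n Psi a b K3 K4" and ?fn = "total_loss n' Psi' a' b' (K3 * B) (K4 * B)"
  have hT: "?okn (T s)" if "?oko s" for s unfolding T_def by (rule fwd_ok[OF that A Q])
  have hU: "?oko (U s)" if "?okn s" for s unfolding U_def by (rule bwd_ok[OF that G B])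
  have LT: "?fn (T s) \<le> ?fo s" if ok: "?oko s" for s
  proof -
    note c = scheme_okD[OF ok] and mc = msg_carrier[OF ok]
    have m: "msg3 n' a' b' (T s) = msg3 n a b s * B" "msg4 n' a' b' (T s) = msg4 n a b s * B"
      unfolding T_def using fwd_msg[OF ok A Q B SA1 SA2] by auto
    have d: "D3 (T s) = Q3 * D3 s" "D4 (T s) = Q4 * D4 s"
      unfolding T_def fwdT_def lin_transform_def by auto
    have "task_err n' Psi' (K3 * B) (Q3 * D3 s) (msg3 n a b s * B) \<le> task_err n Psi K3 (D3 s) (msg3 n a b s)"
      by (rule err_fwd[OF K(1) B psd' PsB c(6) mc(1) Q(1) P3(1,5,6) KBQ3 P3(4)])
    moreover have "task_err n' Psi' (K4 * B) (Q4 * D4 s) (msg4 n a b s * B) \<le> task_err n Psi K4 (D4 s) (msg4 n a b s)"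
      by (rule err_fwd[OF K(2) B psd' PsB c(7) mc(2) Q(2) P4(1,5,6) KBQ4 P4(4)])
    ultimately show ?thesis unfolding total_loss_def m d by simp
  qed
  have LU: "?fo (U s) = ?fn s" if ok: "?okn s" for s
  proof -
    note c = scheme_okD[OF ok] and mc = msg_carrier[OF ok] and mcU = msg_carrier[OF hU[OF ok]]
    have m: "msg3 n a b (U s) * Psi = msg3 n' a' b' s * C * Psi" "msg4 n a b (U s) * Psi = msg4 n' a' b' s * C * Psi"
      unfolding U_def using bwd_msg[OF ok G B C Ps(1) S1 S2] by auto
    have d: "D3 (U s) = B * D3 s" "D4 (U s) = B * D4 s"
      unfolding U_def bwdT_def lin_transform_def by auto
    have "task_err n Psi K3 (B * D3 s) (msg3 n a b (U s)) = task_err n' Psi' (K3 * B) (D3 s) (msg3 n' a' b' s)"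
      unfolding Psi'_def by (rule err_back[OF K(1) B C Ps c(6) mcU(1) mc(1) BC m(1)])
    moreover have "task_err n Psi K4 (B * D4 s) (msg4 n a b (U s)) = task_err n' Psi' (K4 * B) (D4 s) (msg4 n' a' b' s)"
      unfolding Psi'_def by (rule err_back[OF K(2) B C Ps c(7) mcU(2) mc(2) BC m(2)])
    ultimately show ?thesis unfolding total_loss_def d by simp
  qed
  have nn: "0 \<le> ?fo s" if "?oko s" for s by (rule total_loss_nonneg[OF psd K that])
  note AE = abstract_equiv[of ?oko ?okn T U ?fn ?fo, OF hT hU LT LU nn scheme_ok_ex]
  have eq: "opt_loss n Psi a b Z K3 K4 = opt_loss n' Psi' a' b' Z (K3 * B) (K4 * B)"
    unfolding opt_loss_def using AE(1) .
  have f: "\<forall>s. optimal_scheme n Psi a b Z K3 K4 s \<longrightarrow>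
          optimal_scheme n' Psi' a' b' Z (K3 * B) (K4 * B) (lin_transform A1 A1 A2 A2 (1\<^sub>m (2*Z)) Q3 Q4 s)"
    using AE(2) unfolding optimal_scheme_def T_def fwdT_def by blast
  have g: "\<forall>s. optimal_scheme n' Psi' a' b' Z (K3 * B) (K4 * B) s \<longrightarrow>
          optimal_scheme n Psi a b Z K3 K4 (lin_transform G1 G1 G2 G2 (1\<^sub>m (2*Z)) B B s)"
    using AE(3) unfolding optimal_scheme_def U_def bwdT_def by blast
  have one: "1\<^sub>m (2*Z) \<in> carrier_mat (2*Z) (2*Z)" by simp
  have ex1: "\<exists>P13 P15 P24 P25 P56 Q3 Q4. P13 \<in> carrier_mat a a' \<and> P15 \<in> carrier_mat a a' \<and>
       P24 \<in> carrier_mat b b' \<and> P25 \<in> carrier_mat b b' \<and> P56 \<in> carrier_mat (2*Z) (2*Z) \<and>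
       Q3 \<in> carrier_mat n' n \<and> Q4 \<in> carrier_mat n' n \<and>
       (\<forall>s. optimal_scheme n Psi a b Z K3 K4 s \<longrightarrow>
          optimal_scheme n' Psi' a' b' Z (K3 * B) (K4 * B) (lin_transform P13 P15 P24 P25 P56 Q3 Q4 s))"
    apply (rule exI[of _ A1], rule exI[of _ A1], rule exI[of _ A2], rule exI[of _ A2])
    apply (rule exI[of _ "1\<^sub>m (2*Z)"], rule exI[of _ Q3], rule exI[of _ Q4])
    using f A Q one by blast
  have ex2: "\<exists>P13 P15 P24 P25 P56 Q3 Q4. P13 \<in> carrier_mat a' a \<and> P15 \<in> carrier_mat a' a \<and>
       P24 \<in> carrier_mat b' b \<and> P25 \<in> carrier_mat b' b \<and> P56 \<in> carrier_mat (2*Z) (2*Z) \<and>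
       Q3 \<in> carrier_mat n n' \<and> Q4 \<in> carrier_mat n n' \<and>
       (\<forall>s. optimal_scheme n' Psi' a' b' Z (K3 * B) (K4 * B) s \<longrightarrow>
          optimal_scheme n Psi a b Z K3 K4 (lin_transform P13 P15 P24 P25 P56 Q3 Q4 s))"
    apply (rule exI[of _ G1], rule exI[of _ G1], rule exI[of _ G2], rule exI[of _ G2])
    apply (rule exI[of _ "1\<^sub>m (2*Z)"], rule exI[of _ B], rule exI[of _ B])
    using g G B one by blast
  show ?thesis unfolding equivP_def Psi'_def[symmetric]
    using eq ex1 ex2 by (simp only:)
qed

lemma lin_transform_comp:
  assumes ok: "scheme_ok n a b Z s"
    and P: "P13 \<in> carrier_mat a a1" "P15 \<in> carrier_mat a a1" "P24 \<in> carrier_mat b b1" "P25 \<in> carrier_mat b b1"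
      "P56 \<in> carrier_mat (2*Z) (2*Z)" "Q3 \<in> carrier_mat n1 n" "Q4 \<in> carrier_mat n1 n"
    and P': "P13' \<in> carrier_mat a1 a2" "P15' \<in> carrier_mat a1 a2" "P24' \<in> carrier_mat b1 b2" "P25' \<in> carrier_mat b1 b2"
      "P56' \<in> carrier_mat (2*Z) (2*Z)" "Q3' \<in> carrier_mat n2 n1" "Q4' \<in> carrier_mat n2 n1"
  shows "lin_transform P13' P15' P24' P25' P56' Q3' Q4' (lin_transform P13 P15 P24 P25 P56 Q3 Q4 s)
    = lin_transform (P13 * P13') (P15 * P15') (P24 * P24') (P25 * P25') (P56 * P56') (Q3' * Q3) (Q4' * Q4) s"
  using scheme_okD[OF ok] P P' unfolding lin_transform_def
  by (simp add: assoc_mult_mat)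

lemma equiv_trans:
  assumes e1: "equivP Z n a b Psi K3 K4 n1 a1 b1 Psi1 K31 K41"
    and e2: "equivP Z n1 a1 b1 Psi1 K31 K41 n2 a2 b2 Psi2 K32 K42"
  shows "equivP Z n a b Psi K3 K4 n2 a2 b2 Psi2 K32 K42"
proof -
  obtain P13 P15 P24 P25 P56 Q3 Q4 where P: "P13 \<in> carrier_mat a a1" "P15 \<in> carrier_mat a a1"
       "P24 \<in> carrier_mat b b1" "P25 \<in> carrier_mat b b1" "P56 \<in> carrier_mat (2*Z) (2*Z)"
       "Q3 \<in> carrier_mat n1 n" "Q4 \<in> carrier_mat n1 n"
     and Pf: "\<And>s. optimal_scheme n Psi a b Z K3 K4 s \<Longrightarrow>
          optimal_scheme n1 Psi1 a1 b1 Z K31 K41 (lin_transform P13 P15 P24 P25 P56 Q3 Q4 s)"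
    using e1 unfolding equivP_def by blast
  obtain R13 R15 R24 R25 R56 S3 S4 where R: "R13 \<in> carrier_mat a1 a" "R15 \<in> carrier_mat a1 a"
       "R24 \<in> carrier_mat b1 b" "R25 \<in> carrier_mat b1 b" "R56 \<in> carrier_mat (2*Z) (2*Z)"
       "S3 \<in> carrier_mat n n1" "S4 \<in> carrier_mat n n1"
     and Rf: "\<And>s. optimal_scheme n1 Psi1 a1 b1 Z K31 K41 s \<Longrightarrow>
          optimal_scheme n Psi a b Z K3 K4 (lin_transform R13 R15 R24 R25 R56 S3 S4 s)"
    using e1 unfolding equivP_def by blast
  obtain P13' P15' P24' P25' P56' Q3' Q4' where P': "P13' \<in> carrier_mat a1 a2" "P15' \<in> carrier_mat a1 a2"
       "P24' \<in> carrier_mat b1 b2" "P25' \<in> carrier_mat b1 b2" "P56' \<in> carrier_mat (2*Z) (2*Z)"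
       "Q3' \<in> carrier_mat n2 n1" "Q4' \<in> carrier_mat n2 n1"
     and Pf': "\<And>s. optimal_scheme n1 Psi1 a1 b1 Z K31 K41 s \<Longrightarrow>
          optimal_scheme n2 Psi2 a2 b2 Z K32 K42 (lin_transform P13' P15' P24' P25' P56' Q3' Q4' s)"
    using e2 unfolding equivP_def by blast
  obtain R13' R15' R24' R25' R56' S3' S4' where R': "R13' \<in> carrier_mat a2 a1" "R15' \<in> carrier_mat a2 a1"
       "R24' \<in> carrier_mat b2 b1" "R25' \<in> carrier_mat b2 b1" "R56' \<in> carrier_mat (2*Z) (2*Z)"
       "S3' \<in> carrier_mat n1 n2" "S4' \<in> carrier_mat n1 n2"
     and Rf': "\<And>s. optimal_scheme n2 Psi2 a2 b2 Z K32 K42 s \<Longrightarrow>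
          optimal_scheme n1 Psi1 a1 b1 Z K31 K41 (lin_transform R13' R15' R24' R25' R56' S3' S4' s)"
    using e2 unfolding equivP_def by blast
  have f: "optimal_scheme n2 Psi2 a2 b2 Z K32 K42 (lin_transform (P13 * P13') (P15 * P15') (P24 * P24') (P25 * P25') (P56 * P56') (Q3' * Q3) (Q4' * Q4) s)"
    if "optimal_scheme n Psi a b Z K3 K4 s" for s
  proof -
    have ok: "scheme_ok n a b Z s" using that optimal_scheme_def by auto
    show ?thesis using Pf'[OF Pf[OF that]] lin_transform_comp[OF ok P P'] by simp
  qed
  have g: "optimal_scheme n Psi a b Z K3 K4 (lin_transform (R13' * R13) (R15' * R15) (R24' * R24) (R25' * R25) (R56' * R56) (S3 * S3') (S4 * S4') s)"
    if "optimal_scheme n2 Psi2 a2 b2 Z K32 K42 s" for s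
  proof -
    have ok: "scheme_ok n2 a2 b2 Z s" using that optimal_scheme_def by auto
    show ?thesis using Rf[OF Rf'[OF that]] lin_transform_comp[OF ok R' R] by simp
  qed
  have eq: "opt_loss n Psi a b Z K3 K4 = opt_loss n2 Psi2 a2 b2 Z K32 K42"
    using e1 e2 unfolding equivP_def by simp
  have ex1: "\<exists>P13 P15 P24 P25 P56 Q3 Q4. P13 \<in> carrier_mat a a2 \<and> P15 \<in> carrier_mat a a2 \<and>
       P24 \<in> carrier_mat b b2 \<and> P25 \<in> carrier_mat b b2 \<and> P56 \<in> carrier_mat (2*Z) (2*Z) \<and>
       Q3 \<in> carrier_mat n2 n \<and> Q4 \<in> carrier_mat n2 n \<and>
       (\<forall>s. optimal_scheme n Psi a b Z K3 K4 s \<longrightarrow>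
          optimal_scheme n2 Psi2 a2 b2 Z K32 K42 (lin_transform P13 P15 P24 P25 P56 Q3 Q4 s))"
    apply (rule exI[of _ "P13 * P13'"], rule exI[of _ "P15 * P15'"], rule exI[of _ "P24 * P24'"], rule exI[of _ "P25 * P25'"])
    apply (rule exI[of _ "P56 * P56'"], rule exI[of _ "Q3' * Q3"], rule exI[of _ "Q4' * Q4"])
    using f P P' by auto
  have ex2: "\<exists>P13 P15 P24 P25 P56 Q3 Q4. P13 \<in> carrier_mat a2 a \<and> P15 \<in> carrier_mat a2 a \<and>
       P24 \<in> carrier_mat b2 b \<and> P25 \<in> carrier_mat b2 b \<and> P56 \<in> carrier_mat (2*Z) (2*Z) \<and>
       Q3 \<in> carrier_mat n n2 \<and> Q4 \<in> carrier_mat n n2 \<and>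
       (\<forall>s. optimal_scheme n2 Psi2 a2 b2 Z K32 K42 s \<longrightarrow>
          optimal_scheme n Psi a b Z K3 K4 (lin_transform P13 P15 P24 P25 P56 Q3 Q4 s))"
    apply (rule exI[of _ "R13' * R13"], rule exI[of _ "R15' * R15"], rule exI[of _ "R24' * R24"], rule exI[of _ "R25' * R25"])
    apply (rule exI[of _ "R56' * R56"], rule exI[of _ "S3 * S3'"], rule exI[of _ "S4 * S4'"])
    using g R R' by auto
  show ?thesis unfolding equivP_def using eq ex1 ex2 by (simp only:)
qed

lemma mat_mult_entry:
  fixes f g :: "nat \<times> nat \<Rightarrow> real"
  assumes "i < m" "k < p"
  shows "(mat m n f * mat n p g) $$ (i,k) = (\<Sum>l<n. f (i,l) * g (l,k))"
  using assms by (simp add: scalar_prod_def atLeast0LessThan)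

lemma kill_rank1:
  fixes X Y Psi :: "real mat" and v :: "real vec"
  assumes X: "X \<in> carrier_mat q n" and Y: "Y \<in> carrier_mat q n" and psd: "psd_mat n Psi"
    and v: "v \<in> carrier_vec n" and Pv: "Psi *\<^sub>v v = 0\<^sub>v n"
    and XY: "\<And>i l. i < q \<Longrightarrow> l < n \<Longrightarrow> X $$ (i,l) = Y $$ (i,l) + y i * v $ l"
  shows "X * Psi = Y * Psi"
proof -
  have Ps: "Psi \<in> carrier_mat n n" using psd psd_mat_def by auto
  show ?thesis
  proof (rule eq_matI)
    fix i k assume ik: "i < dim_row (Y * Psi)" "k < dim_col (Y * Psi)"
    hence ik': "i < q" "k < n" using Y Ps by auto
    have z: "(\<Sum>l<n. v $ l * Psi $$ (l,k)) = 0"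
    proof -
      have "(\<Sum>l<n. v $ l * Psi $$ (l,k)) = (\<Sum>l<n. Psi $$ (k,l) * v $ l)"
        using psd_sym[OF psd _ ik'(2)] by (intro sum.cong) auto
      also have "\<dots> = (Psi *\<^sub>v v) $ k" using mv_entry[OF Ps v ik'(2)] by simp
      finally show ?thesis using Pv ik' by simp
    qed
    have "(X * Psi) $$ (i,k) = (\<Sum>l<n. (Y $$ (i,l) + y i * v $ l) * Psi $$ (l,k))"
      using mult_entry[OF X Ps ik'] XY ik' by simp
    also have "\<dots> = (\<Sum>l<n. Y $$ (i,l) * Psi $$ (l,k)) + y i * (\<Sum>l<n. v $ l * Psi $$ (l,k))"
      by (simp add: algebra_simps sum.distrib sum_distrib_left)
    also have "\<dots> = (Y * Psi) $$ (i,k)" using z mult_entry[OF Y Ps ik'] by simp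
    finally show "(X * Psi) $$ (i,k) = (Y * Psi) $$ (i,k)" .
  qed (use X Y Ps in auto)
qed

lemma BC_cond:
  fixes B C Psi :: "real mat" and v :: "real vec"
  assumes B: "B \<in> carrier_mat n n'" and C: "C \<in> carrier_mat n' n" and psd: "psd_mat n Psi"
    and v: "v \<in> carrier_vec n" and Pv: "Psi *\<^sub>v v = 0\<^sub>v n"
    and e: "\<And>l k. l < n \<Longrightarrow> k < n \<Longrightarrow> (B * C) $$ (l,k) = (if l = k then 1 else 0) + w l * v $ k"
  shows "B * C * Psi = Psi"
proof -
  have Ps: "Psi \<in> carrier_mat n n" using psd psd_mat_def by auto
  have "B * C * Psi = 1\<^sub>m n * Psi"
    by (rule kill_rank1[OF _ _ psd v Pv, where q=n and y=w]) (use B C e in auto)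
  thus ?thesis using Ps by simp
qed

lemma G1sel_entry:
  fixes G1 :: "real mat"
  assumes "G1 \<in> carrier_mat a' a" "i < a'" "l < n" "a \<le> n"
  shows "(G1 * sel1 n a) $$ (i,l) = (if l < a then G1 $$ (i,l) else 0)"
  using assms mult_entry[of G1 a' a "sel1 n a" n i l] by (simp add: sel1_entry sum_delta_r)

lemma selC1_entry:
  fixes C :: "real mat"
  assumes "C \<in> carrier_mat n' n" "i < a'" "l < n" "a' \<le> n'"
  shows "(sel1 n' a' * C) $$ (i,l) = C $$ (i,l)"
  using assms mult_entry[of "sel1 n' a'" a' n' C n i l] by (simp add: sel1_entry sum_delta_l)

lemma G2sel_entry:
  fixes G2 :: "real mat"
  assumes "G2 \<in> carrier_mat b' b" "i < b'" "l < n" "b \<le> n"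
  shows "(G2 * sel2 n b) $$ (i,l) = (if n - b \<le> l then G2 $$ (i, l - (n - b)) else 0)"
proof -
  have "(G2 * sel2 n b) $$ (i,l) = (\<Sum>q<b. G2 $$ (i,q) * (if l = n - b + q then 1 else 0))"
    using assms mult_entry[of G2 b' b "sel2 n b" n i l] by (simp add: sel2_entry)
  also have "\<dots> = (\<Sum>q<b. if q = l - (n - b) then (if n - b \<le> l then G2 $$ (i, l - (n - b)) else 0) else 0)"
    by (intro sum.cong) auto
  also have "\<dots> = (if n - b \<le> l then G2 $$ (i, l - (n - b)) else 0)" using assms by (subst sum.delta) auto
  finally show ?thesis .
qed

lemma selC2_entry:
  fixes C :: "real mat"
  assumes "C \<in> carrier_mat n' n" "i < b'" "l < n" "b' \<le> n'"
  shows "(sel2 n' b' * C) $$ (i,l) = C $$ (n' - b' + i, l)"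
proof -
  have "(sel2 n' b' * C) $$ (i,l) = (\<Sum>q<n'. (if q = n' - b' + i then 1 else 0) * C $$ (q,l))"
    using assms mult_entry[of "sel2 n' b'" b' n' C n i l] by (simp add: sel2_entry)
  also have "\<dots> = C $$ (n' - b' + i, l)" using assms by (subst sum_delta_l) auto
  finally show ?thesis .
qed

lemma S1_cond:
  fixes G1 C Psi :: "real mat" and v :: "real vec"
  assumes G1: "G1 \<in> carrier_mat a' a" and C: "C \<in> carrier_mat n' n" and psd: "psd_mat n Psi"
    and v: "v \<in> carrier_vec n" and Pv: "Psi *\<^sub>v v = 0\<^sub>v n" and d: "a \<le> n" "a' \<le> n'"
    and e: "\<And>i l. i < a' \<Longrightarrow> l < n \<Longrightarrow> (if l < a then G1 $$ (i,l) else 0) = C $$ (i,l) + y i * v $ l"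
  shows "G1 * sel1 n a * Psi = sel1 n' a' * C * Psi"
  by (rule kill_rank1[OF _ _ psd v Pv, where q=a' and y=y])
     (use G1 C d e G1sel_entry[OF G1 _ _ d(1)] selC1_entry[OF C _ _ d(2)] in auto)

lemma S2_cond:
  fixes G2 C Psi :: "real mat" and v :: "real vec"
  assumes G2: "G2 \<in> carrier_mat b' b" and C: "C \<in> carrier_mat n' n" and psd: "psd_mat n Psi"
    and v: "v \<in> carrier_vec n" and Pv: "Psi *\<^sub>v v = 0\<^sub>v n" and d: "b \<le> n" "b' \<le> n'"
    and e: "\<And>i l. i < b' \<Longrightarrow> l < n \<Longrightarrow> (if n - b \<le> l then G2 $$ (i, l - (n - b)) else 0) = C $$ (n' - b' + i, l) + y i * v $ l"
  shows "G2 * sel2 n b * Psi = sel2 n' b' * C * Psi"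
  by (rule kill_rank1[OF _ _ psd v Pv, where q=b' and y=y])
     (use G2 C d e G2sel_entry[OF G2 _ _ d(1)] selC2_entry[OF C _ _ d(2)] in auto)

lemma delete_step:
  fixes Psi K3 K4 :: "real mat" and v :: "real vec"
  assumes psd: "psd_mat n Psi" and v: "v \<in> carrier_vec n" and Pv: "Psi *\<^sub>v v = 0\<^sub>v n"
    and j: "j < n" and vj: "v $ j \<noteq> 0"
    and ab: "a \<le> n" "b \<le> n" "n \<le> a + b"
    and sup1: "j < a \<Longrightarrow> \<forall>l. a \<le> l \<and> l < n \<longrightarrow> v $ l = 0"
    and sup2: "n - b \<le> j \<Longrightarrow> \<forall>l < n - b. v $ l = 0"
    and K: "K3 \<in> carrier_mat m3 n" "K4 \<in> carrier_mat m4 n"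
    and a': "a' = (if j < a then a - 1 else a)" and b': "b' = (if n - b \<le> j then b - 1 else b)"
  shows "\<exists>B C. B \<in> carrier_mat n (n - 1) \<and> C \<in> carrier_mat (n - 1) n \<and>
     equivP Z n a b Psi K3 K4 (n - 1) a' b' (C * Psi * transpose_mat C) (K3 * B) (K4 * B)"
proof -
  define n' where "n' = n - 1"
  define sk where "sk i = (if i < j then i else Suc i)" for i
  define unsk where "unsk k = (if k < j then k else k - 1)" for k
  define Bf where "Bf = (\<lambda>(l,i). if l = j then - v $ (sk i) / v $ j else if l = sk i then 1 else (0::real))"
  define Cf where "Cf = (\<lambda>(i,l). if l = sk i then 1 else (0::real))"
  define B where "B = mat n n' Bf"
  define C where "C = mat n' n Cf"
  define G1 where "G1 = mat a' a (\<lambda>(i,l). if l = sk i then 1 else (0::real))"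
  define G2 where "G2 = mat b' b (\<lambda>(i,q). if n - b + q = sk (n' - b' + i) then 1 else (0::real))"
  have Bc: "B \<in> carrier_mat n n'" and Cc: "C \<in> carrier_mat n' n" unfolding B_def C_def by auto
  have G: "G1 \<in> carrier_mat a' a" "G2 \<in> carrier_mat b' b" unfolding G1_def G2_def by auto
  have d': "a' \<le> n'" "b' \<le> n'" using a' b' j ab unfolding n'_def by auto
  have BC: "B * C * Psi = Psi"
  proof (rule BC_cond[OF Bc Cc psd v Pv, where w = "\<lambda>l. if l = j then - 1 / v $ j else 0"])
    fix l k assume lk: "l < n" "k < n"
    have "(B * C) $$ (l,k) = (\<Sum>i<n'. Bf (l,i) * Cf (i,k))"
      unfolding B_def C_def using lk by (rule mat_mult_entry)
    also have "\<dots> = (\<Sum>i<n'. if i = unsk k then (if k \<noteq> j then Bf (l, unsk k) else 0) else 0)"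
      by (intro sum.cong refl) (auto simp: Cf_def sk_def unsk_def)
    also have "\<dots> = (if k \<noteq> j then Bf (l, unsk k) else 0)"
      using lk j by (subst sum.delta) (auto simp: unsk_def n'_def)
    also have "\<dots> = (if l = k then 1 else 0) + (if l = j then - 1 / v $ j else 0) * v $ k"
      using vj by (auto simp: Bf_def sk_def unsk_def)
    finally show "(B * C) $$ (l,k) = (if l = k then 1 else 0) + (if l = j then - 1 / v $ j else 0) * v $ k" .
  qed
  have Z1: "B $$ (i,l) = 0" if "i < a" "l < n'" "a' \<le> l" for i l
  proof (cases "j < a")
    case True
    have "a \<le> Suc l" "Suc l < n" using that True a' unfolding n'_def by auto
    hence "v $ Suc l = 0" using sup1[OF True] by blast
    thus ?thesis using that True a' ab j unfolding B_def Bf_def sk_def n'_def by auto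
  next
    case False
    thus ?thesis using that a' ab j unfolding B_def Bf_def sk_def n'_def by auto
  qed
  have Z2: "B $$ (i,l) = 0" if "i < n" "n - b \<le> i" "l < n' - b'" for i l
  proof (cases "n - b \<le> j")
    case True
    have l: "l < n - b" "l < j" using that True b' j unfolding n'_def by auto
    hence "v $ l = 0" using sup2[OF True] by blast
    thus ?thesis using that True b' ab j l unfolding B_def Bf_def sk_def n'_def by auto
  next
    case False
    thus ?thesis using that b' ab j unfolding B_def Bf_def sk_def n'_def by auto
  qed
  have Ce: "C $$ (i,l) = (if l = sk i then 1 else 0)" if "i < n'" "l < n" for i l
    using that unfolding C_def Cf_def by simp
  have skA: "sk i < a" if "i < a'" for i
    using that a' unfolding sk_def by (cases "j < a") auto
  have skB: "n - b \<le> sk (n' - b' + i)" "n' - b' + i < n'" if "i < b'" for i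
    using that b' j ab unfolding sk_def n'_def by (cases "n - b \<le> j"; auto)+
  have S1: "G1 * sel1 n a * Psi = sel1 n' a' * C * Psi"
  proof (rule S1_cond[OF G(1) Cc psd v Pv ab(1) d'(1), where y = "\<lambda>_. 0"])
    fix i l assume il: "i < a'" "l < n"
    have "i < n'" using il d' by simp
    thus "(if l < a then G1 $$ (i,l) else 0) = C $$ (i,l) + 0 * v $ l"
      using Ce[of i l] il skA[OF il(1)] by (auto simp: G1_def)
  qed
  have S2: "G2 * sel2 n b * Psi = sel2 n' b' * C * Psi"
  proof (rule S2_cond[OF G(2) Cc psd v Pv ab(2) d'(2), where y = "\<lambda>_. 0"])
    fix i l assume il: "i < b'" "l < n"
    show "(if n - b \<le> l then G2 $$ (i, l - (n - b)) else 0) = C $$ (n' - b' + i, l) + 0 * v $ l"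
      using Ce[of "n' - b' + i" l] il skB[OF il(1)] ab by (auto simp: G2_def)
  qed
  have "equivP Z n a b Psi K3 K4 n' a' b' (C * Psi * transpose_mat C) (K3 * B) (K4 * B)"
    by (rule step_equiv[OF psd ab(1,2) d' Bc Cc G BC Z1 Z2 S1 S2 K])
  thus ?thesis using Bc Cc unfolding n'_def by blast
qed

lemma absorb_step:
  fixes Psi K3 K4 :: "real mat" and v :: "real vec"
  assumes psd: "psd_mat n Psi" and v: "v \<in> carrier_vec n" and Pv: "Psi *\<^sub>v v = 0\<^sub>v n"
    and j: "j < n - b" and vj: "v $ j \<noteq> 0"
    and ab: "a \<le> n" "b < n" "n \<le> a + b"
    and K: "K3 \<in> carrier_mat m3 n" "K4 \<in> carrier_mat m4 n"
  shows "\<exists>B C. B \<in> carrier_mat n n \<and> C \<in> carrier_mat n n \<and>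
     equivP Z n a b Psi K3 K4 n a (Suc b) (C * Psi * transpose_mat C) (K3 * B) (K4 * B)"
proof -
  define p where "p = n - b - 1"
  have pj: "j \<le> p" "p < n - b" "p < a" "p < n" using j ab unfolding p_def by auto
  define sw where "sw i = (if i = j then p else if i = p then j else i)" for i
  have sw_sw: "sw (sw i) = i" for i unfolding sw_def by auto
  have sw_lt: "i < a \<Longrightarrow> sw i < a" "i < n \<Longrightarrow> sw i < n" for i using pj ab unfolding sw_def by auto
  define Cf where "Cf = (\<lambda>(i,l). if i = p then (if a \<le> l then - v $ l else 0) else (if l = sw i then 1 else (0::real)))"
  define Bf where "Bf = (\<lambda>(l,i). if l = j then (if i = p then 1 / v $ j else if sw i < a then - v $ (sw i) / v $ j else 0)
      else (if i = sw l then 1 else (0::real)))"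
  define B where "B = mat n n Bf"
  define C where "C = mat n n Cf"
  define G1 where "G1 = mat a a (\<lambda>(i,l). if i = p then v $ l else (if l = sw i then 1 else (0::real)))"
  define G2 where "G2 = mat (Suc b) b (\<lambda>(i,q). if i = 0 then (if a \<le> n - b + q then - v $ (n - b + q) else 0)
      else (if q = i - 1 then 1 else (0::real)))"
  have Bc: "B \<in> carrier_mat n n" and Cc: "C \<in> carrier_mat n n" unfolding B_def C_def by auto
  have G: "G1 \<in> carrier_mat a a" "G2 \<in> carrier_mat (Suc b) b" unfolding G1_def G2_def by auto
  have d': "a \<le> n" "Suc b \<le> n" using ab by auto
  have BC: "B * C * Psi = Psi"
  proof (rule BC_cond[OF Bc Cc psd v Pv, where w = "\<lambda>l. if l = j then - 1 / v $ j else 0"])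
    fix l k assume lk: "l < n" "k < n"
    have "(B * C) $$ (l,k) = (\<Sum>i<n. Bf (l,i) * Cf (i,k))"
      unfolding B_def C_def using lk by (rule mat_mult_entry)
    also have "\<dots> = (if l = k then 1 else 0) + (if l = j then - 1 / v $ j else 0) * v $ k"
    proof (cases "l = j")
      case False
      have "(\<Sum>i<n. Bf (l,i) * Cf (i,k)) = (\<Sum>i<n. (if i = sw l then 1 else 0) * Cf (i,k))"
        using False by (intro sum.cong) (auto simp: Bf_def)
      also have "\<dots> = Cf (sw l, k)" using sum_delta_l[where n=n and i="sw l" and f="\<lambda>i. Cf (i,k)"] sw_lt lk by simp
      also have "\<dots> = (if l = k then 1 else 0)" using False sw_sw[of l] unfolding Cf_def sw_def by auto
      finally show ?thesis using False by simp
    next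
      case True
      have "(\<Sum>i<n. Bf (l,i) * Cf (i,k)) = (\<Sum>i<n. (if i = p then Cf (p,k) / v $ j else 0)
          + (if i = sw k then (if k < a \<and> k \<noteq> j then - v $ k / v $ j else 0) else 0))"
      proof (intro sum.cong refl)
        fix i assume i: "i \<in> {..<n}"
        show "Bf (l,i) * Cf (i,k) = (if i = p then Cf (p,k) / v $ j else 0)
          + (if i = sw k then (if k < a \<and> k \<noteq> j then - v $ k / v $ j else 0) else 0)"
        proof (cases "i = p")
          case True
          thus ?thesis using \<open>l = j\<close> pj unfolding Bf_def sw_def by auto
        next
          case False
          have "i = sw k \<longleftrightarrow> k = sw i" using sw_sw by metis
          moreover have "sw i \<noteq> j" using False unfolding sw_def by auto
          ultimately show ?thesis using \<open>l = j\<close> False unfolding Bf_def Cf_def by auto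
        qed
      qed
      also have "\<dots> = Cf (p,k) / v $ j + (if k < a \<and> k \<noteq> j then - v $ k / v $ j else 0)"
        using pj sw_lt(2)[OF lk(2)] by (simp add: sum.distrib)
      also have "\<dots> = (if l = k then 1 else 0) + (if l = j then - 1 / v $ j else 0) * v $ k"
        using True vj pj j unfolding Cf_def by auto
      finally show ?thesis .
    qed
    finally show "(B * C) $$ (l,k) = (if l = k then 1 else 0) + (if l = j then - 1 / v $ j else 0) * v $ k" .
  qed
  have Z1: "B $$ (i,l) = 0" if "i < a" "l < n" "a \<le> l" for i l
    using that pj sw_lt(1)[OF that(1)] unfolding B_def Bf_def sw_def by auto
  have Z2: "B $$ (i,l) = 0" if "i < n" "n - b \<le> i" "l < n - Suc b" for i l
    using that pj j unfolding B_def Bf_def sw_def p_def by auto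
  have Ce: "C $$ (i,l) = Cf (i,l)" if "i < n" "l < n" for i l
    using that unfolding C_def by simp
  have S1: "G1 * sel1 n a * Psi = sel1 n a * C * Psi"
  proof (rule S1_cond[OF G(1) Cc psd v Pv ab(1) d'(1), where y = "\<lambda>i. if i = p then 1 else 0"])
    fix i l assume il: "i < a" "l < n"
    have "i < n" using il ab by simp
    thus "(if l < a then G1 $$ (i,l) else 0) = C $$ (i,l) + (if i = p then 1 else 0) * v $ l"
      using Ce[of i l] il sw_lt(1)[OF il(1)] unfolding G1_def Cf_def by auto
  qed
  have S2: "G2 * sel2 n b * Psi = sel2 n (Suc b) * C * Psi"
  proof (rule S2_cond[OF G(2) Cc psd v Pv less_imp_le[OF ab(2)] d'(2), where y = "\<lambda>_. 0"])
    fix i l assume il: "i < Suc b" "l < n"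
    have e: "n - Suc b + i = p + i" "p + i < n" using il ab unfolding p_def by auto
    show "(if n - b \<le> l then G2 $$ (i, l - (n - b)) else 0) = C $$ (n - Suc b + i, l) + 0 * v $ l"
    proof (cases "i = 0")
      case True
      have c1: "C $$ (n - Suc b + i, l) = (if a \<le> l then - v $ l else 0)"
        using Ce[of p l] il e True pj unfolding Cf_def by simp
      have c2: "G2 $$ (i, l - (n - b)) = (if a \<le> l then - v $ l else 0)" if "n - b \<le> l"
      proof -
        have "l - (n - b) < b" "n - b + (l - (n - b)) = l" using il that ab by auto
        thus ?thesis using True unfolding G2_def by simp
      qed
      have c3: "\<not> a \<le> l" if "\<not> n - b \<le> l" using that ab by simp
      show ?thesis using c1 c2 c3 by auto
    next
      case False
      have sw: "sw (p + i) = p + i" using False pj unfolding sw_def by auto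
      have c1: "C $$ (n - Suc b + i, l) = (if l = p + i then 1 else 0)"
        using Ce[of "p + i" l] il e False sw unfolding Cf_def by simp
      have c2: "G2 $$ (i, l - (n - b)) = (if l = p + i then 1 else 0)" if "n - b \<le> l"
      proof -
        have "l - (n - b) < b" using il that ab by auto
        moreover have "(l - (n - b) = i - 1) \<longleftrightarrow> l = p + i" using that False ab unfolding p_def by auto
        ultimately show ?thesis using False il unfolding G2_def by simp
      qed
      have c3: "l \<noteq> p + i" if "\<not> n - b \<le> l" using that ab False unfolding p_def by auto
      show ?thesis using c1 c2 c3 by auto
    qed
  qed
  have "equivP Z n a b Psi K3 K4 n a (Suc b) (C * Psi * transpose_mat C) (K3 * B) (K4 * B)"
    by (rule step_equiv[OF psd ab(1) less_imp_le[OF ab(2)] d' Bc Cc G BC Z1 Z2 S1 S2 K])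
  thus ?thesis using Bc Cc by blast
qed

lemma equiv_refl:
  fixes Psi K3 K4 :: "real mat"
  assumes psd: "psd_mat n Psi" and ab: "a \<le> n" "b \<le> n"
    and K: "K3 \<in> carrier_mat m3 n" "K4 \<in> carrier_mat m4 n"
  shows "equivP Z n a b Psi K3 K4 n a b Psi K3 K4"
proof -
  have Ps: "Psi \<in> carrier_mat n n" using psd psd_mat_def by auto
  have e: "equivP Z n a b Psi K3 K4 n a b (1\<^sub>m n * Psi * transpose_mat (1\<^sub>m n)) (K3 * 1\<^sub>m n) (K4 * 1\<^sub>m n)"
    by (rule step_equiv[OF psd ab ab one_carrier_mat one_carrier_mat one_carrier_mat one_carrier_mat _ _ _ _ _ K])
       (use Ps ab in auto)
  thus ?thesis using Ps K by simp
qed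

definition goal_P where
  "goal_P Z m3 m4 n a b Psi K3 K4 \<longleftrightarrow> (\<exists>n' a' b' Psi' K3' K4'.
     max a' b' \<le> n' \<and> n' \<le> a' + b' \<and> psd_mat n' Psi' \<and> vec_space.rank n' Psi' = n' \<and>
     K3' \<in> carrier_mat m3 n' \<and> K4' \<in> carrier_mat m4 n' \<and> equivP Z n a b Psi K3 K4 n' a' b' Psi' K3' K4')"

lemma goal_trans:
  assumes "equivP Z n a b Psi K3 K4 n1 a1 b1 Psi1 K31 K41" "goal_P Z m3 m4 n1 a1 b1 Psi1 K31 K41"
  shows "goal_P Z m3 m4 n a b Psi K3 K4"
  using assms equiv_trans unfolding goal_P_def by meson

lemma main:
  fixes Psi K3 K4 :: "real mat"
  assumes "max a b \<le> n" "n \<le> a + b" "psd_mat n Psi" "K3 \<in> carrier_mat m3 n" "K4 \<in> carrier_mat m4 n"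
  shows "goal_P Z m3 m4 n a b Psi K3 K4"
  using assms
proof (induction "2 * n - b" arbitrary: n a b Psi K3 K4 rule: less_induct)
  case less
  have ab: "a \<le> n" "b \<le> n" "n \<le> a + b" using less.prems by auto
  note psd = less.prems(3) and K = less.prems(4,5)
  have Ps: "Psi \<in> carrier_mat n n" using psd psd_mat_def by auto
  show ?case
  proof (cases "det Psi = 0")
    case False
    have "vec_space.rank n Psi = n" by (rule vec_space.low_rank_det_zero[OF Ps False])
    thus ?thesis unfolding goal_P_def using less.prems equiv_refl[OF psd ab(1,2) K] by blast
  next
    case True
    obtain v where v: "v \<in> carrier_vec n" "v \<noteq> 0\<^sub>v n" "Psi *\<^sub>v v = 0\<^sub>v n"
      using det_0_iff_vec_prod_zero_field[OF Ps] True by blast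
    obtain i0 where i0: "i0 < n" "v $ i0 \<noteq> 0" using v(1,2) by (metis eq_vecI carrier_vecD index_zero_vec)
    have del: "goal_P Z m3 m4 n a b Psi K3 K4"
      if j: "j < n" "v $ j \<noteq> 0" and sup1: "j < a \<Longrightarrow> \<forall>l. a \<le> l \<and> l < n \<longrightarrow> v $ l = 0"
        and sup2: "n - b \<le> j \<Longrightarrow> \<forall>l < n - b. v $ l = 0" for j
    proof -
      define a' where "a' = (if j < a then a - 1 else a)"
      define b' where "b' = (if n - b \<le> j then b - 1 else b)"
      obtain B C where BC: "B \<in> carrier_mat n (n - 1)" "C \<in> carrier_mat (n - 1) n"
        "equivP Z n a b Psi K3 K4 (n - 1) a' b' (C * Psi * transpose_mat C) (K3 * B) (K4 * B)"
        using delete_step[OF psd v(1) v(3) j ab sup1 sup2 K a'_def b'_def] by blast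
      have c: "max a' b' \<le> n - 1" "n - 1 \<le> a' + b'" "2 * (n - 1) - b' < 2 * n - b"
        using j ab unfolding a'_def b'_def by auto
      have "goal_P Z m3 m4 (n - 1) a' b' (C * Psi * transpose_mat C) (K3 * B) (K4 * B)"
        by (rule less.hyps[OF c(3) c(1) c(2) psd_congr[OF psd BC(2)]]) (use K BC in auto)
      thus ?thesis using goal_trans BC(3) by blast
    qed
    show ?thesis
    proof (cases "\<exists>k. a \<le> k \<and> k < n \<and> v $ k \<noteq> 0")
      case True
      then obtain k where k: "a \<le> k" "k < n" "v $ k \<noteq> 0" by blast
      show ?thesis
      proof (cases "\<exists>j < n - b. v $ j \<noteq> 0")
        case True
        then obtain j where j: "j < n - b" "v $ j \<noteq> 0" by blast
        have bn: "b < n" using j by auto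
        obtain B C where BC: "B \<in> carrier_mat n n" "C \<in> carrier_mat n n"
          "equivP Z n a b Psi K3 K4 n a (Suc b) (C * Psi * transpose_mat C) (K3 * B) (K4 * B)"
          using absorb_step[OF psd v(1) v(3) j ab(1) bn ab(3) K] by blast
        have c: "max a (Suc b) \<le> n" "n \<le> a + Suc b" "2 * n - Suc b < 2 * n - b" using ab bn by auto
        have "goal_P Z m3 m4 n a (Suc b) (C * Psi * transpose_mat C) (K3 * B) (K4 * B)"
          by (rule less.hyps[OF c(3) c(1) c(2) psd_congr[OF psd BC(2)]]) (use K BC in auto)
        thus ?thesis using goal_trans BC(3) by blast
      next
        case False
        hence "\<forall>l < n - b. v $ l = 0" by auto
        thus ?thesis using del[OF k(2) k(3)] k(1) by auto
      qed
    next
      case False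
      hence s1: "\<forall>l. a \<le> l \<and> l < n \<longrightarrow> v $ l = 0" by auto
      show ?thesis
      proof (cases "\<exists>j < n - b. v $ j \<noteq> 0")
        case True
        then obtain j where j: "j < n - b" "v $ j \<noteq> 0" by blast
        show ?thesis using del[OF _ j(2)] j(1) s1 by auto
      next
        case False
        hence "\<forall>l < n - b. v $ l = 0" by auto
        thus ?thesis using del[OF i0] s1 by auto
      qed
    qed
  qed
qed

theorem theorem1:
  fixes n a b Z m3 m4 :: nat and Psi K3 K4 :: "real mat"
  assumes "0 < n" "0 < a" "0 < b" "0 < Z"
    and "max a b \<le> n" "n \<le> a + b"
    and "psd_mat n Psi"
    and "K3 \<in> carrier_mat m3 n" "K4 \<in> carrier_mat m4 n"
  shows "\<exists>n' a' b' Psi' K3' K4'.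
     max a' b' \<le> n' \<and> n' \<le> a' + b' \<and>
     psd_mat n' Psi' \<and> vec_space.rank n' Psi' = n' \<and>
     K3' \<in> carrier_mat m3 n' \<and> K4' \<in> carrier_mat m4 n' \<and>
     opt_loss n Psi a b Z K3 K4 = opt_loss n' Psi' a' b' Z K3' K4' \<and>
     (\<exists>P13 P15 P24 P25 P56 Q3 Q4. \<forall>s.
        optimal_scheme n Psi a b Z K3 K4 s \<longrightarrow>
        optimal_scheme n' Psi' a' b' Z K3' K4' (lin_transform P13 P15 P24 P25 P56 Q3 Q4 s)) \<and>
     (\<exists>P13 P15 P24 P25 P56 Q3 Q4. \<forall>s.
        optimal_scheme n' Psi' a' b' Z K3' K4' s \<longrightarrow>
        optimal_scheme n Psi a b Z K3 K4 (lin_transform P13 P15 P24 P25 P56 Q3 Q4 s))"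
proof -
  have "goal_P Z m3 m4 n a b Psi K3 K4" by (rule main) (use assms in auto)
  then obtain n' a' b' Psi' K3' K4' where g: "max a' b' \<le> n'" "n' \<le> a' + b'" "psd_mat n' Psi'"
      "vec_space.rank n' Psi' = n'" "K3' \<in> carrier_mat m3 n'" "K4' \<in> carrier_mat m4 n'"
      and e: "equivP Z n a b Psi K3 K4 n' a' b' Psi' K3' K4'"
    unfolding goal_P_def by blast
  have eq: "opt_loss n Psi a b Z K3 K4 = opt_loss n' Psi' a' b' Z K3' K4'" using e unfolding equivP_def by simp
  obtain P13 P15 P24 P25 P56 Q3 Q4 where
    f: "\<forall>s. optimal_scheme n Psi a b Z K3 K4 s \<longrightarrow>
          optimal_scheme n' Psi' a' b' Z K3' K4' (lin_transform P13 P15 P24 P25 P56 Q3 Q4 s)"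
    using e unfolding equivP_def by blast
  obtain R13 R15 R24 R25 R56 S3 S4 where
    g2: "\<forall>s. optimal_scheme n' Psi' a' b' Z K3' K4' s \<longrightarrow>
          optimal_scheme n Psi a b Z K3 K4 (lin_transform R13 R15 R24 R25 R56 S3 S4 s)"
    using e unfolding equivP_def by blast
  have ex1: "\<exists>P13 P15 P24 P25 P56 Q3 Q4. \<forall>s.
        optimal_scheme n Psi a b Z K3 K4 s \<longrightarrow>
        optimal_scheme n' Psi' a' b' Z K3' K4' (lin_transform P13 P15 P24 P25 P56 Q3 Q4 s)"
    using f by blast
  have ex2: "\<exists>P13 P15 P24 P25 P56 Q3 Q4. \<forall>s.
        optimal_scheme n' Psi' a' b' Z K3' K4' s \<longrightarrow>
        optimal_scheme n Psi a b Z K3 K4 (lin_transform P13 P15 P24 P25 P56 Q3 Q4 s)"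
    using g2 by blast
  show ?thesis
    apply (rule exI[of _ n'], rule exI[of _ a'], rule exI[of _ b'], rule exI[of _ Psi'])
    apply (rule exI[of _ K3'], rule exI[of _ K4'])
    using g eq ex1 ex2 by (simp only: simp_thms)
qed

end
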